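(* Let $\mathcal{A}=(Q,\delta,I,F)$ be a complete Büchi automaton with $n=|Q|$ and let $\mathcal{B}_S$ be the automaton produced from $\mathcal{A}$ by Schewe's rank-based complementation construction (described in the context). For $x\in\{\mathit{di},\mathit{de},\mathit{di+de}\}$, let $\mathcal{B}_S^{\mathit{sat},x}$ be the saturated variant $\mathcal{B}_S^{\mathit{sat}}$ (described in the context) in which every occurrence of $Q_2$ is replaced by $Q_2^{x}$, where $Q_2^{\mathit{di}}=Q_2\setminus\{(S,O,f,i)\in Q_2\mid\exists p,q\in S: p\preceq_{\mathit{di}}q\wedge f(p)>f(q)\}$, $Q_2^{\mathit{de}}=Q_2\setminus\{(S,O,f,i)\in Q_2\mid\exists p,q\in S: p\preceq_{\mathit{de}}q\wedge f(p)>\lceil f(q)\rceil\}$, $Q_2^{\mathit{di+de}}=Q_2^{\mathit{di}}\cap Q_2^{\mathit{de}}$, and $\lceil x\rceil$ is the smallest even number $\ge x$. Then $\mathcal{L}(\mathcal{B}_S^{\mathit{sat},\mathit{di}})=\mathcal{L}(\mathcal{B}_S^{\mathit{sat},\mathit{de}})=\mathcal{L}(\mathcal{B}_S^{\mathit{sat},\mathit{di+de}})=\mathcal{L}(\mathcal{B}_S)$.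
   Context: Fix a finite nonempty alphabet $\Sigma$. A Büchi automaton is $\mathcal{A}=(Q,\delta,I,F)$ with $\delta:Q\times\Sigma\to2^Q$, complete if $\delta(q,a)\ne\emptyset$ always; $\delta(P,a)=\bigcup_{p\in P}\delta(p,a)$. A run from $q$ on $\alpha=\alpha_0\alpha_1\cdots$ is $\rho$ with $\rho_0=q$, $\rho_{i+1}\in\delta(\rho_i,\alpha_i)$; accepting if some state of $F$ occurs infinitely often; $\mathcal{L}(\mathcal{A})$ is the set of words with an accepting run from an initial state. Simulations: in the game from $(p_0,r_0)$, in round $i$ Spoiler picks $p_i\xrightarrow{\alpha_i}p_{i+1}$ and Duplicator answers $r_i\xrightarrow{\alpha_i}r_{i+1}$; a Duplicator strategy is a map $\sigma$ with $\sigma(r,p\xrightarrow{a}p')\in\delta(r,a)$ (no lookahead). Duplicator wins the direct game if for all $i$, $p_i\in F\Rightarrow r_i\in F$, and the delayed game if for all $i$, $p_i\in F\Rightarrow\exists k\ge i: r_k\in F$. $p\preceq_{\mathit{di}}r$ (resp. $p\preceq_{\mathit{de}}r$) iff Duplicator has a winning strategy in the direct (resp. delayed) game from $(p,r)$. Schewe's construction. A ranking is $f:Q\to\{0,\dots,2n\}$ with $f(q)$ even for $q\in F$; $\mathrm{rank}(f)=\max_q f(q)$. $f$ is $S$-tight if $\mathrm{rank}(f)=r$ is odd, $\{f(s)\mid s\in S\}\supseteq\{1,3,\dots,r\}$ and $\{f(q)\mid q\notin S\}=\{0\}$; $\mathcal{T}$ is the set of $Q$-tight rankings. $\mathcal{B}_S=(Q',\delta',I',F')$: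 $Q'=Q_1\cup Q_2$, $Q_1=2^Q$, $Q_2=\{(S,O,f,i)\in 2^Q\times2^Q\times\mathcal{T}\times\{0,2,\dots,2n-2\}\mid f \text{ is } S\text{-tight},\ O\subseteq S\cap f^{-1}(i)\}$; $I'=\{I\}$; $\delta'=\delta_1\cup\delta_2\cup\delta_3$ with $\delta_1(S,a)=\{\delta(S,a)\}$; $\delta_2(S,a)=\{(S',\emptyset,f,0)\in Q_2\mid S'=\delta(S,a), f\text{ is } S'\text{-tight}\}$; $(S',O',f',i')\in\delta_3((S,O,f,i),a)$ iff $(S',O',f',i')\in Q_2$, $S'=\delta(S,a)$, $f'(q')\le f(q)$ for all $q\in S,q'\in\delta(q,a)$, $\mathrm{rank}(f)=\mathrm{rank}(f')$, $f'$ is $S'$-tight, and either ($O=\emptyset$, $i'=(i+2)\bmod(\mathrm{rank}(f')+1)$, $O'=f'^{-1}(i')$) or ($O\ne\emptyset$, $i'=i$, $O'=\delta(O,a)\cap f'^{-1}(i)$); $F'=\{\emptyset\}\cup\{(S,\emptyset,f,i)\in Q_2\}$. Saturated variant: with $\mathrm{str}(S)=\{q\in Q\mid\exists s\in S:q\preceq_{\mathit{de}}s\}$, $\mathcal{B}_S^{\mathit{sat}}$ has the same $Q'$, $I'$, $F'$ but transitions $\delta_1^{\mathit{sat}}(S,a)=\{\mathrm{str}(\delta(S,a))\}$; $\delta_2^{\mathit{sat}}(S,a)=\{(S',\emptyset,f,0)\in Q_2\mid S'=\mathrm{str}(\delta(S,a))\}$; $(S',O',f',i')\in\delta_3^{\mathit{sat}}((S,O,f,i),a)$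 iff $(S',O',f',i')\in Q_2$, $S'=\mathrm{str}(\delta(S,a))$, $f'(q')\le f(q)$ for all $q\in S,q'\in\delta(q,a)$, $\mathrm{rank}(f)=\mathrm{rank}(f')$, and either ($O=\emptyset$, $i'=(i+2)\bmod(\mathrm{rank}(f')+1)$, $O'=f'^{-1}(i')$) or ($O\ne\emptyset$, $i'=i$, $O'=\delta(O,a)\cap f'^{-1}(i)$). *)

theory Defs
  imports Main
begin

type_synonym ('s, 'a) trans = "'s \<Rightarrow> 'a \<Rightarrow> 's set"

definition complete :: "('s, 'a) trans \<Rightarrow> bool" where
  "complete \<delta> \<longleftrightarrow> (\<forall>q a. \<delta> q a \<noteq> {})"

definition dset :: "('s, 'a) trans \<Rightarrow> 's set \<Rightarrow> 'a \<Rightarrow> 's set" where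
  "dset \<delta> P a = (\<Union>p\<in>P. \<delta> p a)"

definition is_run :: "('s, 'a) trans \<Rightarrow> 's \<Rightarrow> (nat \<Rightarrow> 'a) \<Rightarrow> (nat \<Rightarrow> 's) \<Rightarrow> bool" where
  "is_run \<delta> q \<alpha> \<rho> \<longleftrightarrow> \<rho> 0 = q \<and> (\<forall>i. \<rho> (Suc i) \<in> \<delta> (\<rho> i) (\<alpha> i))"

definition accepting :: "'s set \<Rightarrow> (nat \<Rightarrow> 's) \<Rightarrow> bool" where
  "accepting F \<rho> \<longleftrightarrow> (\<exists>q\<in>F. \<exists>\<^sub>\<infinity> i. \<rho> i = q)"

definition lang :: "('s, 'a) trans \<Rightarrow> 's set \<Rightarrow> 's set \<Rightarrow> (nat \<Rightarrow> 'a) set" where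
  "lang \<delta> I F = {\<alpha>. \<exists>q\<in>I. \<exists>\<rho>. is_run \<delta> q \<alpha> \<rho> \<and> accepting F \<rho>}"

definition dup_strategy :: "('q, 'a) trans \<Rightarrow> ('q \<Rightarrow> 'q \<Rightarrow> 'a \<Rightarrow> 'q \<Rightarrow> 'q) \<Rightarrow> bool" where
  "dup_strategy \<delta> \<sigma> \<longleftrightarrow> (\<forall>r p a p'. p' \<in> \<delta> p a \<longrightarrow> \<sigma> r p a p' \<in> \<delta> r a)"

fun dup_play :: "('q \<Rightarrow> 'q \<Rightarrow> 'a \<Rightarrow> 'q \<Rightarrow> 'q) \<Rightarrow> 'q \<Rightarrow> (nat \<Rightarrow> 'q) \<Rightarrow> (nat \<Rightarrow> 'a) \<Rightarrow> nat \<Rightarrow> 'q" where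
  "dup_play \<sigma> r0 p \<alpha> 0 = r0"
| "dup_play \<sigma> r0 p \<alpha> (Suc i) = \<sigma> (dup_play \<sigma> r0 p \<alpha> i) (p i) (\<alpha> i) (p (Suc i))"

definition direct_sim :: "('q, 'a) trans \<Rightarrow> 'q set \<Rightarrow> 'q \<Rightarrow> 'q \<Rightarrow> bool" where
  "direct_sim \<delta> F p0 r0 \<longleftrightarrow> (\<exists>\<sigma>. dup_strategy \<delta> \<sigma> \<and>
     (\<forall>\<alpha> p. is_run \<delta> p0 \<alpha> p \<longrightarrow> (\<forall>i. p i \<in> F \<longrightarrow> dup_play \<sigma> r0 p \<alpha> i \<in> F)))"

definition delayed_sim :: "('q, 'a) trans \<Rightarrow> 'q set \<Rightarrow> 'q \<Rightarrow> 'q \<Rightarrow> bool" where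
  "delayed_sim \<delta> F p0 r0 \<longleftrightarrow> (\<exists>\<sigma>. dup_strategy \<delta> \<sigma> \<and>
     (\<forall>\<alpha> p. is_run \<delta> p0 \<alpha> p \<longrightarrow> (\<forall>i. p i \<in> F \<longrightarrow> (\<exists>k\<ge>i. dup_play \<sigma> r0 p \<alpha> k \<in> F))))"

section \<open>Schewe's construction; Q = UNIV of the finite type 'q, n = card (UNIV :: 'q set)\<close>

type_synonym 'q macro = "'q set \<times> 'q set \<times> ('q \<Rightarrow> nat) \<times> nat"
type_synonym 'q bstate = "'q set + 'q macro"

definition rank :: "('q::finite \<Rightarrow> nat) \<Rightarrow> nat" where
  "rank f = Max (range f)"

definition is_ranking :: "'q set \<Rightarrow> ('q::finite \<Rightarrow> nat) \<Rightarrow> bool" where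
  "is_ranking F f \<longleftrightarrow> (\<forall>q. f q \<le> 2 * card (UNIV :: 'q set)) \<and> (\<forall>q\<in>F. even (f q))"

definition tight :: "'q set \<Rightarrow> 'q set \<Rightarrow> ('q::finite \<Rightarrow> nat) \<Rightarrow> bool" where
  "tight F S f \<longleftrightarrow> is_ranking F f \<and> odd (rank f)
     \<and> {r. odd r \<and> r \<le> rank f} \<subseteq> f ` S \<and> (\<forall>q. q \<notin> S \<longrightarrow> f q = 0)"

definition Q2 :: "'q set \<Rightarrow> ('q::finite) macro set" where
  "Q2 F = {(S, Ob, f, i). tight F UNIV f \<and> tight F S f \<and> even i \<and> i \<le> 2 * card (UNIV :: 'q set) - 2
             \<and> Ob \<subseteq> S \<inter> f -` {i}}"

definition step3_ok :: "('q::finite, 'a) trans \<Rightarrow> 'q macro \<Rightarrow> 'a \<Rightarrow> 'q macro \<Rightarrow> bool" where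
  "step3_ok \<delta> s a s' \<longleftrightarrow> (case s of (S, Ob, f, i) \<Rightarrow> case s' of (S', Ob', f', i') \<Rightarrow>
      (\<forall>q\<in>S. \<forall>q'\<in>\<delta> q a. f' q' \<le> f q) \<and> rank f = rank f'
      \<and> ((Ob = {} \<and> i' = (i + 2) mod (rank f' + 1) \<and> Ob' = S' \<inter> f' -` {i'})
         \<or> (Ob \<noteq> {} \<and> i' = i \<and> Ob' = dset \<delta> Ob a \<inter> f' -` {i})))"

definition schewe_delta :: "('q::finite, 'a) trans \<Rightarrow> 'q set \<Rightarrow> ('q bstate, 'a) trans" where
  "schewe_delta \<delta> F s a = (case s of
     Inl S \<Rightarrow> {Inl (dset \<delta> S a)}
              \<union> {Inr (S', {}, f, 0) | S' f. (S', {}, f, 0) \<in> Q2 F \<and> S' = dset \<delta> S a \<and> tight F S' f}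
   | Inr m \<Rightarrow> (if m \<in> Q2 F then
       {Inr m' | m'. m' \<in> Q2 F \<and> fst m' = dset \<delta> (fst m) a \<and> tight F (fst m') (fst (snd (snd m')))
                      \<and> step3_ok \<delta> m a m'}
       else {}))"

definition schewe_final :: "'q set \<Rightarrow> ('q::finite) bstate set" where
  "schewe_final F = {Inl {}} \<union> {Inr (S, {}, f, i) | S f i. (S, {}, f, i) \<in> Q2 F}"

section \<open>Saturated variant, parametrised by the replacement X of Q2\<close>

definition str :: "('q, 'a) trans \<Rightarrow> 'q set \<Rightarrow> 'q set \<Rightarrow> 'q set" where
  "str \<delta> F S = {q. \<exists>s\<in>S. delayed_sim \<delta> F q s}"

definition sat_delta :: "('q::finite, 'a) trans \<Rightarrow> 'q set \<Rightarrow> 'q macro set \<Rightarrow> ('q bstate, 'a) trans" where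
  "sat_delta \<delta> F X s a = (case s of
     Inl S \<Rightarrow> {Inl (str \<delta> F (dset \<delta> S a))}
              \<union> {Inr (S', {}, f, 0) | S' f. (S', {}, f, 0) \<in> X \<and> S' = str \<delta> F (dset \<delta> S a)}
   | Inr m \<Rightarrow> (if m \<in> X then
       {Inr m' | m'. m' \<in> X \<and> fst m' = str \<delta> F (dset \<delta> (fst m) a) \<and> step3_ok \<delta> m a m'}
       else {}))"

definition sat_final :: "('q::finite) macro set \<Rightarrow> 'q bstate set" where
  "sat_final X = {Inl {}} \<union> {Inr (S, {}, f, i) | S f i. (S, {}, f, i) \<in> X}"

definition ceil_even :: "nat \<Rightarrow> nat" where
  "ceil_even x = (if even x then x else x + 1)"

definition Q2_di :: "('q::finite, 'a) trans \<Rightarrow> 'q set \<Rightarrow> 'q macro set" where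
  "Q2_di \<delta> F = Q2 F - {(S, Ob, f, i) | S Ob f i. (S, Ob, f, i) \<in> Q2 F \<and>
       (\<exists>p\<in>S. \<exists>q\<in>S. direct_sim \<delta> F p q \<and> f p > f q)}"

definition Q2_de :: "('q::finite, 'a) trans \<Rightarrow> 'q set \<Rightarrow> 'q macro set" where
  "Q2_de \<delta> F = Q2 F - {(S, Ob, f, i) | S Ob f i. (S, Ob, f, i) \<in> Q2 F \<and>
       (\<exists>p\<in>S. \<exists>q\<in>S. delayed_sim \<delta> F p q \<and> f p > ceil_even (f q))}"

definition Q2_dide :: "('q::finite, 'a) trans \<Rightarrow> 'q set \<Rightarrow> 'q macro set" where
  "Q2_dide \<delta> F = Q2_di \<delta> F \<inter> Q2_de \<delta> F"

end

theory Submission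
  imports Defs "HOL-Library.Infinite_Set"
begin

lemma pigeon_all:
  fixes P :: "'b \<Rightarrow> nat \<Rightarrow> bool"
  assumes fin: "finite A" and ex: "\<And>K. \<exists>v\<in>A. P v K"
    and dn: "\<And>v K K'. P v K \<Longrightarrow> K' \<le> K \<Longrightarrow> P v K'"
  shows "\<exists>v\<in>A. \<forall>K. P v K"
proof (rule ccontr)
  assume "\<not> ?thesis"
  then have "\<forall>v\<in>A. \<exists>K. \<not> P v K" by blast
  then obtain g where g: "\<And>v. v\<in>A \<Longrightarrow> \<not> P v (g v)" by metis
  from ex obtain v where v: "v \<in> A" "P v (Max (g ` A))" by blast
  then have "g v \<le> Max (g ` A)" using fin by simp
  with v dn have "P v (g v)" by blast
  with g v show False by blast
qed

definition spl :: "nat \<Rightarrow> (nat \<Rightarrow> 'q) \<Rightarrow> (nat \<Rightarrow> 'q) \<Rightarrow> nat \<Rightarrow> 'q" where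
  "spl t \<rho> \<pi> = (\<lambda>x. if x \<le> t then \<rho> x else \<pi> (x - t))"

lemma spl_le: "x \<le> t \<Longrightarrow> spl t \<rho> \<pi> x = \<rho> x"
  by (simp add: spl_def)

lemma spl_ge: "\<pi> 0 = \<rho> t \<Longrightarrow> spl t \<rho> \<pi> (t + y) = \<pi> y"
  by (simp add: spl_def)

lemma fin_max_choice:
  "(\<And>j. j < (N::nat) \<Longrightarrow> \<exists>l. \<forall>k\<ge>l. P j k) \<Longrightarrow> \<exists>L. \<forall>j<N. \<forall>k\<ge>L. P j (k::nat)"
proof (induction N)
  case 0 then show ?case by simp
next
  case (Suc N)
  then obtain L where L: "\<forall>j<N. \<forall>k\<ge>L. P j k" by (meson less_SucI)
  obtain l where l: "\<forall>k\<ge>l. P N k" using Suc.prems by blast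
  show ?case
    by (rule exI[of _ "max L l"]) (metis L l less_Suc_eq max.bounded_iff)
qed

lemma nat_dec_const:
  fixes f :: "nat \<Rightarrow> nat"
  assumes "\<And>k. f (Suc k) \<le> f k"
  shows "\<exists>l. \<forall>k\<ge>l. f k = f l"
proof -
  obtain l where l: "f l = (LEAST v. v \<in> range f)" by (metis (mono_tags) LeastI rangeE rangeI)
  have "f k = f l" if "k \<ge> l" for k
  proof -
    have "f k \<le> f l" using that
    proof (induction k rule: dec_induct)
      case base then show ?case by simp
    next
      case (step k) then show ?case using assms[of k] by linarith
    qed
    moreover have "f l \<le> f k" using l by (simp add: Least_le)
    ultimately show ?thesis by simp
  qed
  then show ?thesis by blast
qed

locale dag =
  fixes \<delta> :: "('q::finite, 'a) trans" and F :: "'q set" and \<alpha> :: "nat \<Rightarrow> 'a" and S :: "nat \<Rightarrow> 'q set"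
  assumes cpl: "complete \<delta>"
    and closed: "\<And>k q q'. q \<in> S k \<Longrightarrow> q' \<in> \<delta> q (\<alpha> k) \<Longrightarrow> q' \<in> S (Suc k)"
begin

definition eds :: "nat \<Rightarrow> (nat \<Rightarrow> 'q) \<Rightarrow> nat \<Rightarrow> bool" where
  "eds k \<pi> m \<longleftrightarrow> (\<forall>j<m. \<pi> (Suc j) \<in> \<delta> (\<pi> j) (\<alpha> (k+j)))"

definition ieds :: "nat \<Rightarrow> (nat \<Rightarrow> 'q) \<Rightarrow> bool" where
  "ieds k \<pi> \<longleftrightarrow> (\<forall>j. \<pi> (Suc j) \<in> \<delta> (\<pi> j) (\<alpha> (k+j)))"

definition path :: "('q \<times> nat) set \<Rightarrow> 'q \<Rightarrow> nat \<Rightarrow> (nat \<Rightarrow> 'q) \<Rightarrow> nat \<Rightarrow> bool" where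
  "path G q k \<pi> m \<longleftrightarrow> \<pi> 0 = q \<and> eds k \<pi> m \<and> (\<forall>j\<le>m. (\<pi> j, k+j) \<in> G)"

definition ipath :: "('q \<times> nat) set \<Rightarrow> 'q \<Rightarrow> nat \<Rightarrow> (nat \<Rightarrow> 'q) \<Rightarrow> bool" where
  "ipath G q k \<pi> \<longleftrightarrow> \<pi> 0 = q \<and> ieds k \<pi> \<and> (\<forall>j. (\<pi> j, k+j) \<in> G)"

definition reachF :: "('q \<times> nat) set \<Rightarrow> 'q \<Rightarrow> nat \<Rightarrow> bool" where
  "reachF G q k \<longleftrightarrow> (\<exists>\<pi> m. path G q k \<pi> m \<and> \<pi> m \<in> F)"

definition ifin :: "('q \<times> nat) set \<Rightarrow> 'q \<Rightarrow> nat \<Rightarrow> bool" where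
  "ifin G q k \<longleftrightarrow> (\<exists>\<pi>. ipath G q k \<pi>)"

fun Gs :: "nat \<Rightarrow> ('q \<times> nat) set" where
  "Gs 0 = {(q,k). q \<in> S k}"
| "Gs (Suc j) = (if even j then {(q,k). (q,k) \<in> Gs j \<and> ifin (Gs j) q k}
                 else {(q,k). (q,k) \<in> Gs j \<and> reachF (Gs j) q k})"

lemma Gs_Suc_even: "even j \<Longrightarrow> (q,k) \<in> Gs (Suc j) \<longleftrightarrow> (q,k) \<in> Gs j \<and> ifin (Gs j) q k"
  by simp

lemma Gs_Suc_odd: "odd j \<Longrightarrow> (q,k) \<in> Gs (Suc j) \<longleftrightarrow> (q,k) \<in> Gs j \<and> reachF (Gs j) q k"
  by simp

lemma Gs_odd: "(q,k) \<in> Gs (Suc (2*i)) \<longleftrightarrow> (q,k) \<in> Gs (2*i) \<and> ifin (Gs (2*i)) q k"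
  by simp

lemma Gs_even: "(q,k) \<in> Gs (Suc (Suc (2*i))) \<longleftrightarrow> (q,k) \<in> Gs (Suc (2*i)) \<and> reachF (Gs (Suc (2*i))) q k"
  by simp

lemma Gs_Suc_sub: "Gs (Suc j) \<subseteq> Gs j"
  by auto

declare Gs.simps(2)[simp del]

lemma Gs_anti: "j \<le> j' \<Longrightarrow> Gs j' \<subseteq> Gs j"
  by (induction j' rule: dec_induct) (use Gs_Suc_sub in auto)

lemma Gs_S: "(q,k) \<in> Gs j \<Longrightarrow> q \<in> S k"
  using Gs_anti[of 0 j] by auto

lemma spl_eds:
  assumes "eds k \<rho> t" "\<pi> 0 = \<rho> t" "eds (k+t) \<pi> m"
  shows "eds k (spl t \<rho> \<pi>) (t+m)"
  unfolding eds_def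
proof (intro allI impI)
  fix j assume j: "j < t + m"
  show "spl t \<rho> \<pi> (Suc j) \<in> \<delta> (spl t \<rho> \<pi> j) (\<alpha> (k + j))"
  proof (cases "j < t")
    case True
    then show ?thesis using assms(1) by (simp add: spl_def eds_def)
  next
    case False
    then obtain y where y: "j = t + y" by (metis le_add_diff_inverse not_less)
    with j have "y < m" by simp
    then have "\<pi> (Suc y) \<in> \<delta> (\<pi> y) (\<alpha> (k + t + y))" using assms(3) by (simp add: eds_def)
    moreover have "spl t \<rho> \<pi> (Suc j) = \<pi> (Suc y)" using spl_ge[of \<pi> \<rho> t "Suc y"] assms(2) y by simp
    moreover have "spl t \<rho> \<pi> j = \<pi> y" using spl_ge[of \<pi> \<rho> t y] assms(2) y by simp
    ultimately show ?thesis using y by (simp add: add.assoc)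
  qed
qed

lemma spl_ieds:
  assumes "eds k \<rho> t" "\<pi> 0 = \<rho> t" "ieds (k+t) \<pi>"
  shows "ieds k (spl t \<rho> \<pi>)"
  unfolding ieds_def
proof
  fix j
  have "eds (k+t) \<pi> (Suc j)" using assms(3) by (simp add: eds_def ieds_def)
  from spl_eds[OF assms(1,2) this] show "spl t \<rho> \<pi> (Suc j) \<in> \<delta> (spl t \<rho> \<pi> j) (\<alpha> (k + j))"
    by (simp add: eds_def)
qed

lemma ieds_eds: "ieds k \<pi> \<Longrightarrow> eds k \<pi> m"
  by (simp add: eds_def ieds_def)

lemma ieds_shift: "ieds k \<pi> \<Longrightarrow> ieds (k+t) (\<lambda>y. \<pi> (t+y))"
  by (simp add: ieds_def add.assoc)

lemma eds_shift: "eds k \<pi> (t+m) \<Longrightarrow> eds (k+t) (\<lambda>y. \<pi> (t+y)) m"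
  by (simp add: eds_def add.assoc)

lemma eds_mono: "eds k \<pi> m \<Longrightarrow> m' \<le> m \<Longrightarrow> eds k \<pi> m'"
  by (simp add: eds_def)

lemma ipath_shift: "ipath G q k \<pi> \<Longrightarrow> ipath G (\<pi> t) (k+t) (\<lambda>y. \<pi> (t+y))"
  by (auto simp: ipath_def ieds_shift add.assoc)

lemma ipath_path: "ipath G q k \<pi> \<Longrightarrow> path G q k \<pi> m"
  by (auto simp: ipath_def path_def ieds_eds)

lemma path_mono: "path G q k \<pi> m \<Longrightarrow> m' \<le> m \<Longrightarrow> path G q k \<pi> m'"
  by (auto simp: path_def eds_def)

lemma path_G_mono: "path G q k \<pi> m \<Longrightarrow> G \<subseteq> G' \<Longrightarrow> path G' q k \<pi> m"
  by (auto simp: path_def)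

lemma ipath_G_mono: "ipath G q k \<pi> \<Longrightarrow> G \<subseteq> G' \<Longrightarrow> ipath G' q k \<pi>"
  by (auto simp: ipath_def)

lemma ieds_in_S: "ieds k \<rho> \<Longrightarrow> \<rho> 0 \<in> S k \<Longrightarrow> \<rho> j \<in> S (k+j)"
  by (induction j) (auto simp: ieds_def intro: closed)

lemma eds_in_S: "eds k \<rho> m \<Longrightarrow> \<rho> 0 \<in> S k \<Longrightarrow> j \<le> m \<Longrightarrow> \<rho> j \<in> S (k+j)"
  by (induction j) (auto simp: eds_def intro: closed)

lemma exists_run: "q \<in> S k \<Longrightarrow> \<exists>\<rho>. ipath (Gs 0) q k \<rho>"
proof -
  assume q: "q \<in> S k"
  define \<rho> where "\<rho> = rec_nat q (\<lambda>j p. SOME p'. p' \<in> \<delta> p (\<alpha> (k+j)))"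
  have 0: "\<rho> 0 = q" by (simp add: \<rho>_def)
  have "\<rho> (Suc j) \<in> \<delta> (\<rho> j) (\<alpha> (k+j))" for j
  proof -
    have "\<delta> (\<rho> j) (\<alpha> (k+j)) \<noteq> {}" using cpl by (simp add: complete_def)
    then have "(SOME p'. p' \<in> \<delta> (\<rho> j) (\<alpha> (k+j))) \<in> \<delta> (\<rho> j) (\<alpha> (k+j))" by (simp add: some_in_eq)
    then show ?thesis by (simp add: \<rho>_def)
  qed
  then have ie: "ieds k \<rho>" by (simp add: ieds_def)
  have "(\<rho> j, k+j) \<in> Gs 0" for j using ieds_in_S[OF ie] q 0 by simp
  then show ?thesis using 0 ie by (auto simp: ipath_def)
qed

lemma extend_path:
  assumes "path (Gs 0) q k \<pi> m"
  shows "\<exists>\<rho>. ipath (Gs 0) q k \<rho> \<and> (\<forall>j\<le>m. \<rho> j = \<pi> j)"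
proof -
  have "\<pi> m \<in> S (k+m)" using assms by (auto simp: path_def)
  then obtain \<rho>2 where r2: "ipath (Gs 0) (\<pi> m) (k+m) \<rho>2" using exists_run by blast
  let ?r = "spl m \<pi> \<rho>2"
  have e: "ieds k ?r" using spl_ieds[of k \<pi> m \<rho>2] assms r2 by (auto simp: path_def ipath_def)
  have r0: "?r 0 = q" using assms by (simp add: spl_def path_def)
  moreover have "?r j \<in> S (k+j)" for j
  proof -
    have "q \<in> S k" using assms by (auto simp: path_def)
    then show ?thesis using ieds_in_S[OF e, of j] r0 by simp
  qed
  ultimately have "ipath (Gs 0) q k ?r" using e by (auto simp: ipath_def)
  then show ?thesis using spl_le[of _ m \<pi> \<rho>2] by blast
qed


definition pre :: "'q \<Rightarrow> (nat \<Rightarrow> 'q) \<Rightarrow> nat \<Rightarrow> 'q" where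
  "pre q \<pi> = (\<lambda>y. case y of 0 \<Rightarrow> q | Suc y' \<Rightarrow> \<pi> y')"

lemma pre_0[simp]: "pre q \<pi> 0 = q" and pre_Suc[simp]: "pre q \<pi> (Suc y) = \<pi> y"
  by (simp_all add: pre_def)

lemma ipath_pre:
  assumes "(q,k) \<in> G" "\<pi> 0 \<in> \<delta> q (\<alpha> k)" "ipath G q' (Suc k) \<pi>"
  shows "ipath G q k (pre q \<pi>)"
proof -
  have "ieds k (pre q \<pi>)" unfolding ieds_def
  proof
    fix j show "pre q \<pi> (Suc j) \<in> \<delta> (pre q \<pi> j) (\<alpha> (k + j))"
      using assms by (cases j) (auto simp: ipath_def ieds_def)
  qed
  moreover have "(pre q \<pi> j, k+j) \<in> G" for j
    using assms by (cases j) (auto simp: ipath_def)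
  ultimately show ?thesis by (simp add: ipath_def)
qed

lemma path_pre:
  assumes "(q,k) \<in> G" "\<pi> 0 \<in> \<delta> q (\<alpha> k)" "path G q' (Suc k) \<pi> m"
  shows "path G q k (pre q \<pi>) (Suc m)"
proof -
  have "eds k (pre q \<pi>) (Suc m)" unfolding eds_def
  proof (intro allI impI)
    fix j assume "j < Suc m" then show "pre q \<pi> (Suc j) \<in> \<delta> (pre q \<pi> j) (\<alpha> (k + j))"
      using assms by (cases j) (auto simp: path_def eds_def)
  qed
  moreover have "(pre q \<pi> j, k+j) \<in> G" if "j \<le> Suc m" for j
    using assms that by (cases j) (auto simp: path_def)
  ultimately show ?thesis by (simp add: path_def)
qed

lemma ipath_odd:
  assumes "ipath (Gs (2*i)) q k \<pi>"
  shows "ipath (Gs (Suc (2*i))) q k \<pi>"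
proof -
  have "(\<pi> t, k+t) \<in> Gs (Suc (2*i))" for t
  proof -
    have "ifin (Gs (2*i)) (\<pi> t) (k+t)" using ipath_shift[OF assms, of t] unfolding ifin_def by blast
    moreover have "(\<pi> t, k+t) \<in> Gs (2*i)" using assms unfolding ipath_def by blast
    ultimately show ?thesis using Gs_odd by blast
  qed
  then show ?thesis using assms by (simp add: ipath_def)
qed

lemma edge_mono:
  assumes "q \<in> S k" "q' \<in> \<delta> q (\<alpha> k)"
  shows "(q', Suc k) \<in> Gs j \<Longrightarrow> (q,k) \<in> Gs j"
proof (induction j)
  case 0
  then show ?case using assms by simp
next
  case (Suc j)
  have "(q', Suc k) \<in> Gs j" using Suc.prems Gs_Suc_sub by blast
  then have IH: "(q,k) \<in> Gs j" using Suc.IH by blast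
  show ?case
  proof (cases "even j")
    case True
    with Suc.prems obtain \<pi> where "ipath (Gs j) q' (Suc k) \<pi>" by (auto simp: ifin_def Gs_Suc_even)
    moreover then have "\<pi> 0 \<in> \<delta> q (\<alpha> k)" using assms by (simp add: ipath_def)
    ultimately have "ipath (Gs j) q k (pre q \<pi>)" using ipath_pre IH by blast
    then show ?thesis using IH True by (auto simp: ifin_def Gs_Suc_even)
  next
    case False
    with Suc.prems obtain \<pi> m where "path (Gs j) q' (Suc k) \<pi> m" "\<pi> m \<in> F" by (auto simp: reachF_def Gs_Suc_odd)
    moreover then have "\<pi> 0 \<in> \<delta> q (\<alpha> k)" using assms by (simp add: path_def)
    ultimately have "path (Gs j) q k (pre q \<pi>) (Suc m)" "pre q \<pi> (Suc m) \<in> F" using path_pre IH by auto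
    then have "reachF (Gs j) q k" unfolding reachF_def by blast
    then show ?thesis using IH False Gs_Suc_odd by blast
  qed
qed

lemma dup_prefix: "(\<And>y. y \<le> x \<Longrightarrow> \<rho> y = \<rho>' y) \<Longrightarrow> dup_play \<sigma> s \<rho> \<beta> x = dup_play \<sigma> s \<rho>' \<beta> x"
  by (induction x) auto

lemma dup_ieds:
  assumes "dup_strategy \<delta> \<sigma>" "ieds k \<rho>"
  shows "ieds k (dup_play \<sigma> s \<rho> (\<lambda>x. \<alpha> (k+x)))"
  using assms by (auto simp: ieds_def dup_strategy_def)

lemma ieds_run: "ieds k \<rho> \<Longrightarrow> is_run \<delta> (\<rho> 0) (\<lambda>x. \<alpha> (k+x)) \<rho>"
  by (simp add: ieds_def is_run_def)

lemma sim_mono_gen: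
  assumes str: "dup_strategy \<delta> \<sigma>"
   and win: "\<forall>\<alpha>' \<rho>'. is_run \<delta> p \<alpha>' \<rho>' \<longrightarrow> (\<forall>i. \<rho>' i \<in> F \<longrightarrow> (\<exists>k'\<ge>i. dup_play \<sigma> s \<rho>' \<alpha>' k' \<in> F))"
   and s: "s \<in> S k"
  shows "ieds k \<rho> \<Longrightarrow> \<rho> 0 = p \<Longrightarrow> (\<rho> t, k+t) \<in> Gs j \<Longrightarrow> (dup_play \<sigma> s \<rho> (\<lambda>x. \<alpha> (k+x)) t, k+t) \<in> Gs j"
proof (induction j arbitrary: \<rho> t)
  case 0
  have "ieds k (dup_play \<sigma> s \<rho> (\<lambda>x. \<alpha> (k+x)))" using dup_ieds[OF str 0(1)] .
  from ieds_in_S[OF this] s show ?case by simp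
next
  case (Suc j)
  let ?d = "\<lambda>\<rho>. dup_play \<sigma> s \<rho> (\<lambda>x. \<alpha> (k+x))"
  have inj: "(\<rho> t, k+t) \<in> Gs j" using Suc.prems(3) Gs_Suc_sub by blast
  have dj: "(?d \<rho> t, k+t) \<in> Gs j" using Suc.IH[OF Suc.prems(1,2) inj] .
  show ?case
  proof (cases "even j")
    case True
    with Suc.prems obtain \<pi> where pi: "ipath (Gs j) (\<rho> t) (k+t) \<pi>" by (auto simp: ifin_def Gs_Suc_even)
    let ?r = "spl t \<rho> \<pi>"
    have e: "ieds k ?r" using spl_ieds[of k \<rho> t \<pi>] Suc.prems(1) pi by (auto simp: ipath_def ieds_eds)
    have r0: "?r 0 = p" using Suc.prems(2) by (simp add: spl_def)
    have rt: "?r (t+y) = \<pi> y" for y using spl_ge[of \<pi> \<rho> t y] pi by (simp add: ipath_def)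
    have "(?d ?r (t+y), k+(t+y)) \<in> Gs j" for y
      using Suc.IH[OF e r0, of "t+y"] rt pi by (simp add: ipath_def add.assoc)
    moreover have "ieds (k+t) (\<lambda>y. ?d ?r (t+y))" using ieds_shift[OF dup_ieds[OF str e]] .
    moreover have "?d ?r t = ?d \<rho> t" by (rule dup_prefix) (simp add: spl_def)
    ultimately have "ipath (Gs j) (?d \<rho> t) (k+t) (\<lambda>y. ?d ?r (t+y))"
      by (simp add: ipath_def add.assoc)
    then show ?thesis using dj True by (auto simp: ifin_def Gs_Suc_even)
  next
    case False
    then obtain i where "j = 2*i+1" by (rule oddE)
    then have j: "j = Suc (2*i)" by simp
    from False Suc.prems have "reachF (Gs j) (\<rho> t) (k+t)" using Gs_Suc_odd by blast
    then obtain \<pi> m where pi: "path (Gs j) (\<rho> t) (k+t) \<pi> m" "\<pi> m \<in> F"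
      unfolding reachF_def by blast
    then have "(\<pi> m, k+t+m) \<in> Gs j" by (simp add: path_def add.assoc)
    then have "ifin (Gs (2*i)) (\<pi> m) (k+t+m)" using j Gs_odd by blast
    then obtain \<pi>2 where p2: "ipath (Gs (2*i)) (\<pi> m) (k+t+m) \<pi>2" unfolding ifin_def by blast
    then have p2': "ipath (Gs j) (\<pi> m) (k+t+m) \<pi>2" using ipath_odd j by simp
    let ?c = "spl m \<pi> \<pi>2"
    have ec: "ieds (k+t) ?c" using spl_ieds[of "k+t" \<pi> m \<pi>2] pi p2' by (auto simp: ipath_def path_def)
    have c0: "?c 0 = \<rho> t" using pi by (simp add: spl_def path_def)
    have cin: "(?c y, k+t+y) \<in> Gs j" for y
    proof (cases "y \<le> m")
      case True then show ?thesis using pi by (simp add: spl_def path_def)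
    next
      case False
      then obtain z where "y = m + z" by (metis le_add_diff_inverse nat_le_linear)
      then show ?thesis using p2' spl_ge[of \<pi>2 \<pi> m z] by (simp add: ipath_def add.assoc)
    qed
    let ?r = "spl t \<rho> ?c"
    have e: "ieds k ?r" using spl_ieds[of k \<rho> t ?c] Suc.prems(1) ec c0 by (auto simp: ieds_eds)
    have r0: "?r 0 = p" using Suc.prems(2) by (simp add: spl_def)
    have rt: "?r (t+y) = ?c y" for y using spl_ge[of ?c \<rho> t y] c0 by simp
    have din: "(?d ?r (t+y), k+(t+y)) \<in> Gs j" for y
      using Suc.IH[OF e r0, of "t+y"] rt cin by (simp add: add.assoc)
    have "?r (t+m) \<in> F" using rt pi(2) spl_le[of m m \<pi> \<pi>2] by simp
    moreover have "is_run \<delta> p (\<lambda>x. \<alpha> (k+x)) ?r" using ieds_run[OF e] r0 by simp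
    ultimately obtain k' where k': "k' \<ge> t+m" "?d ?r k' \<in> F" using win by blast
    then obtain z where z: "k' = t + z" by (metis le_add1 le_add_diff_inverse le_trans)
    have "path (Gs j) (?d \<rho> t) (k+t) (\<lambda>y. ?d ?r (t+y)) z"
    proof -
      have "?d ?r t = ?d \<rho> t" by (rule dup_prefix) (simp add: spl_def)
      moreover have "ieds (k+t) (\<lambda>y. ?d ?r (t+y))" using ieds_shift[OF dup_ieds[OF str e]] .
      ultimately show ?thesis using din by (simp add: path_def ieds_eds add.assoc)
    qed
    then have "reachF (Gs j) (?d \<rho> t) (k+t)" using k' z by (auto simp: reachF_def)
    then show ?thesis using dj False Gs_Suc_odd by blast
  qed
qed

lemma sim_mono_path:
  assumes ds: "delayed_sim \<delta> F p s" and s: "s \<in> S k" and pth: "path (Gs j) p k \<pi> m"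
  shows "\<exists>\<pi>'. path (Gs j) s k \<pi>' m"
proof -
  obtain \<sigma> where str: "dup_strategy \<delta> \<sigma>" and
    win: "\<forall>\<alpha>' \<rho>'. is_run \<delta> p \<alpha>' \<rho>' \<longrightarrow> (\<forall>i. \<rho>' i \<in> F \<longrightarrow> (\<exists>k'\<ge>i. dup_play \<sigma> s \<rho>' \<alpha>' k' \<in> F))"
    using ds by (auto simp: delayed_sim_def)
  have "path (Gs 0) p k \<pi> m" using path_G_mono[OF pth Gs_anti[of 0 j]] by simp
  then obtain \<rho> where r: "ipath (Gs 0) p k \<rho>" "\<forall>j\<le>m. \<rho> j = \<pi> j" using extend_path by blast
  let ?d = "dup_play \<sigma> s \<rho> (\<lambda>x. \<alpha> (k+x))"
  have "(?d t, k+t) \<in> Gs j" if "t \<le> m" for t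
    using sim_mono_gen[OF str win s, of \<rho> t j] r pth that by (auto simp: ipath_def path_def)
  moreover have "ieds k ?d" using dup_ieds[OF str] r by (simp add: ipath_def)
  ultimately have "path (Gs j) s k ?d m" by (simp add: path_def ieds_eds)
  then show ?thesis by blast
qed

lemma sim_mono:
  assumes "delayed_sim \<delta> F p s" "s \<in> S k" "(p,k) \<in> Gs j"
  shows "(s,k) \<in> Gs j"
proof -
  have "path (Gs j) p k (\<lambda>_. p) 0" using assms by (simp add: path_def eds_def)
  then obtain \<pi>' where "path (Gs j) s k \<pi>' 0" using sim_mono_path assms by blast
  then have "\<pi>' 0 = s" "(\<pi>' 0, k+0) \<in> Gs j" unfolding path_def by blast+
  then show ?thesis by simp
qed


lemma path_spl:
  assumes "path G q k \<pi> m" "path G (\<pi> m) (k+m) \<pi>' m'"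
  shows "path G q k (spl m \<pi> \<pi>') (m+m') \<and> spl m \<pi> \<pi>' (m+m') = \<pi>' m'"
proof -
  have e: "eds k (spl m \<pi> \<pi>') (m+m')" using spl_eds[of k \<pi> m \<pi>' m'] assms by (auto simp: path_def)
  have "(spl m \<pi> \<pi>' j, k+j) \<in> G" if "j \<le> m+m'" for j
  proof (cases "j \<le> m")
    case True then show ?thesis using assms(1) by (simp add: spl_def path_def)
  next
    case False
    then obtain z where z: "j = m + z" by (metis le_add_diff_inverse nat_le_linear)
    then have "z \<le> m'" using that by simp
    then show ?thesis using assms(2) z spl_ge[of \<pi>' \<pi> m z] by (simp add: path_def add.assoc)
  qed
  moreover have "spl m \<pi> \<pi>' 0 = q" using assms(1) by (simp add: spl_def path_def)
  moreover have "spl m \<pi> \<pi>' (m+m') = \<pi>' m'" using spl_ge[of \<pi>' \<pi> m m'] assms(2) by (simp add: path_def)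
  ultimately show ?thesis using e by (simp add: path_def)
qed

lemma path_shift1:
  assumes "path G q k \<pi> (Suc m)"
  shows "path G (\<pi> 1) (Suc k) (\<lambda>y. \<pi> (Suc y)) m \<and> \<pi> 1 \<in> \<delta> q (\<alpha> k)"
  using assms by (auto simp: path_def eds_def)

lemma konig:
  assumes "\<And>K. \<exists>\<pi>. path G q k \<pi> K"
  shows "\<exists>\<pi>. ipath G q k \<pi>"
proof -
  define P where "P = (\<lambda>(q,k). \<forall>K. \<exists>\<pi>. path G q k \<pi> K)"
  have step: "\<exists>q'. q' \<in> \<delta> q (\<alpha> k) \<and> P (q', Suc k)" if Pq: "P (q,k)" for q k
  proof -
    have "\<exists>q'\<in>\<delta> q (\<alpha> k). \<forall>K. (\<lambda>q' K. \<exists>\<pi>. path G q' (Suc k) \<pi> K) q' K"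
    proof (rule pigeon_all)
      show "finite (\<delta> q (\<alpha> k))" by simp
      fix K
      obtain \<pi> where "path G q k \<pi> (Suc K)" using Pq unfolding P_def by auto
      from path_shift1[OF this] show "\<exists>q'\<in>\<delta> q (\<alpha> k). \<exists>\<pi>. path G q' (Suc k) \<pi> K" by blast
    next
      fix q' K K' assume "\<exists>\<pi>. path G q' (Suc k) \<pi> K" "K' \<le> K"
      then show "\<exists>\<pi>. path G q' (Suc k) \<pi> K'" using path_mono by blast
    qed
    then show ?thesis by (auto simp: P_def)
  qed
  define \<rho> where "\<rho> = rec_nat q (\<lambda>j p. SOME q'. q' \<in> \<delta> p (\<alpha> (k+j)) \<and> P (q', Suc (k+j)))"
  have r0: "\<rho> 0 = q" by (simp add: \<rho>_def)
  have rs: "\<rho> (Suc j) = (SOME q'. q' \<in> \<delta> (\<rho> j) (\<alpha> (k+j)) \<and> P (q', Suc (k+j)))" for j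
    by (simp add: \<rho>_def)
  have inv: "P (\<rho> j, k+j)" for j
  proof (induction j)
    case 0 then show ?case using assms r0 by (simp add: P_def)
  next
    case (Suc j)
    from someI_ex[OF step[OF this]] show ?case using rs[of j] by simp
  qed
  have ed: "\<rho> (Suc j) \<in> \<delta> (\<rho> j) (\<alpha> (k+j))" for j
    using someI_ex[OF step[OF inv[of j]]] rs[of j] by simp
  have "(\<rho> j, k+j) \<in> G" for j
  proof -
    obtain \<pi> where "path G (\<rho> j) (k+j) \<pi> 0" using inv[of j] by (auto simp: P_def)
    then show ?thesis by (auto simp: path_def)
  qed
  then have "ipath G q k \<rho>" using r0 ed by (simp add: ipath_def ieds_def)
  then show ?thesis by blast
qed

end

locale rdag = dag \<delta> F \<alpha> S for \<delta> :: "('q::finite, 'a) trans" and F \<alpha> S +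
  assumes rej: "\<And>k \<pi>. ieds k \<pi> \<Longrightarrow> \<pi> 0 \<in> S k \<Longrightarrow> \<not> (\<forall>i. \<exists>j\<ge>i. \<pi> j \<in> F)"
begin

lemma Ffree_exists:
  assumes ne: "(q0,k0) \<in> Gs (Suc (2*i))"
  shows "\<exists>q k. (q,k) \<in> Gs (Suc (2*i)) \<and> \<not> reachF (Gs (Suc (2*i))) q k"
proof (rule ccontr)
  let ?H = "Gs (Suc (2*i))"
  assume "\<not> ?thesis"
  then have all: "\<And>q k. (q,k) \<in> ?H \<Longrightarrow> reachF ?H q k" by blast
  define dF where "dF = (\<lambda>q k. LEAST m. \<exists>\<pi>. path ?H q k \<pi> m \<and> \<pi> m \<in> F)"
  have step: "\<exists>q'. q' \<in> \<delta> q (\<alpha> k) \<and> (q', Suc k) \<in> ?H \<and> (q \<notin> F \<longrightarrow> dF q' (Suc k) < dF q k)"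
    if qH: "(q,k) \<in> ?H" for q k
  proof (cases "q \<in> F")
    case True
    from qH have "ifin (Gs (2*i)) q k" using Gs_odd by blast
    then obtain \<pi> where "ipath (Gs (2*i)) q k \<pi>" by (auto simp: ifin_def)
    then have "ipath ?H q k \<pi>" by (rule ipath_odd)
    then have "\<pi> 1 \<in> \<delta> q (\<alpha> k) \<and> (\<pi> 1, Suc k) \<in> ?H"
      unfolding ipath_def ieds_def by (metis One_nat_def add_Suc_right add_0_right)
    then show ?thesis using True by blast
  next
    case False
    have ex: "\<exists>m \<pi>. path ?H q k \<pi> m \<and> \<pi> m \<in> F" using all[OF qH] by (auto simp: reachF_def)
    then obtain \<pi> where pi: "path ?H q k \<pi> (dF q k)" "\<pi> (dF q k) \<in> F"
      unfolding dF_def by (smt (verit, best) LeastI_ex)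
    have "dF q k \<noteq> 0"
    proof
      assume "dF q k = 0"
      then show False using pi False by (simp add: path_def)
    qed
    then obtain m where m: "dF q k = Suc m" using not0_implies_Suc by blast
    from path_shift1[of ?H q k \<pi> m] pi m
    have a: "path ?H (\<pi> 1) (Suc k) (\<lambda>y. \<pi> (Suc y)) m" "\<pi> 1 \<in> \<delta> q (\<alpha> k)" by auto
    then have "dF (\<pi> 1) (Suc k) \<le> m" unfolding dF_def using pi m by (intro Least_le) auto
    moreover have "(\<pi> 1, Suc k) \<in> ?H" using a(1) by (auto simp: path_def)
    ultimately show ?thesis using a m by auto
  qed
  define \<rho> where "\<rho> = rec_nat q0 (\<lambda>j p. SOME q'. q' \<in> \<delta> p (\<alpha> (k0+j)) \<and> (q', Suc (k0+j)) \<in> ?H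
      \<and> (p \<notin> F \<longrightarrow> dF q' (Suc (k0+j)) < dF p (k0+j)))"
  have rs: "\<rho> (Suc j) = (SOME q'. q' \<in> \<delta> (\<rho> j) (\<alpha> (k0+j)) \<and> (q', Suc (k0+j)) \<in> ?H
      \<and> (\<rho> j \<notin> F \<longrightarrow> dF q' (Suc (k0+j)) < dF (\<rho> j) (k0+j)))" for j
    by (simp add: \<rho>_def)
  have r0: "\<rho> 0 = q0" by (simp add: \<rho>_def)
  have inH: "(\<rho> j, k0+j) \<in> ?H" for j
  proof (induction j)
    case 0 then show ?case using ne r0 by simp
  next
    case (Suc j)
    from someI_ex[OF step[OF this]] show ?case using rs[of j] by simp
  qed
  have prp: "\<rho> (Suc j) \<in> \<delta> (\<rho> j) (\<alpha> (k0+j)) \<and> (\<rho> j \<notin> F \<longrightarrow> dF (\<rho> (Suc j)) (k0 + Suc j) < dF (\<rho> j) (k0+j))" for j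
    using someI_ex[OF step[OF inH[of j]]] rs[of j] by simp
  have ie: "ieds k0 \<rho>" using prp by (simp add: ieds_def)
  have "\<forall>j. dF (\<rho> j) (k0+j) \<le> n \<longrightarrow> (\<exists>j'\<ge>j. \<rho> j' \<in> F)" for n
  proof (induction n)
    case 0
    show ?case
    proof (intro allI impI)
      fix j assume "dF (\<rho> j) (k0 + j) \<le> 0"
      then show "\<exists>j'\<ge>j. \<rho> j' \<in> F" using prp[of j] by (metis le_refl not_less0 le_zero_eq)
    qed
  next
    case (Suc n)
    show ?case
    proof (intro allI impI)
      fix j assume a: "dF (\<rho> j) (k0 + j) \<le> Suc n"
      show "\<exists>j'\<ge>j. \<rho> j' \<in> F"
      proof (cases "\<rho> j \<in> F")
        case True then show ?thesis by blast
      next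
        case False
        then have "dF (\<rho> (Suc j)) (k0 + Suc j) \<le> n" using prp[of j] a by simp
        then obtain j' where "j' \<ge> Suc j" "\<rho> j' \<in> F" using Suc.IH by blast
        then show ?thesis by (intro exI[of _ j']) simp
      qed
    qed
  qed
  then have "\<forall>i. \<exists>j\<ge>i. \<rho> j \<in> F" by blast
  moreover have "\<rho> 0 \<in> S k0" using inH[of 0] Gs_S by simp
  ultimately show False using rej[OF ie] by blast
qed

lemma width:
  "\<exists>l. \<forall>k\<ge>l. card {q. (q,k) \<in> Gs (2*i)} \<le> card (UNIV :: 'q set) - i"
proof (induction i)
  case 0
  show ?case by (simp add: card_mono)
next
  case (Suc i)
  then obtain l where l: "\<And>k. k \<ge> l \<Longrightarrow> card {q. (q,k) \<in> Gs (2*i)} \<le> card (UNIV :: 'q set) - i" by blast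
  have eq: "2 * Suc i = Suc (Suc (2*i))" by simp
  show ?case
  proof (cases "Gs (Suc (2*i)) = {}")
    case True
    then have "Gs (2 * Suc i) = {}" using Gs_Suc_sub[of "Suc (2*i)"] eq by auto
    then show ?thesis by simp
  next
    case False
    then obtain q0 k0 where "(q0,k0) \<in> Gs (Suc (2*i))" by auto
    from Ffree_exists[OF this] obtain q1 k1 where q1: "(q1,k1) \<in> Gs (Suc (2*i))"
       "\<not> reachF (Gs (Suc (2*i))) q1 k1" by blast
    then have "ifin (Gs (2*i)) q1 k1" using Gs_odd by blast
    then obtain \<pi> where "ipath (Gs (2*i)) q1 k1 \<pi>" by (auto simp: ifin_def)
    then have pi: "ipath (Gs (Suc (2*i))) q1 k1 \<pi>" by (rule ipath_odd)
    have notin: "(\<pi> y, k1+y) \<notin> Gs (2 * Suc i)" for y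
    proof
      assume "(\<pi> y, k1+y) \<in> Gs (2 * Suc i)"
      then have "reachF (Gs (Suc (2*i))) (\<pi> y) (k1+y)" using Gs_even eq by metis
      then obtain \<pi>' m where "path (Gs (Suc (2*i))) (\<pi> y) (k1+y) \<pi>' m" "\<pi>' m \<in> F"
        by (auto simp: reachF_def)
      with path_spl[OF ipath_path[OF pi, of y]] have "reachF (Gs (Suc (2*i))) q1 k1"
        unfolding reachF_def by metis
      with q1 show False by blast
    qed
    have inn: "(\<pi> y, k1+y) \<in> Gs (2*i)" for y using pi Gs_Suc_sub unfolding ipath_def by blast
    show ?thesis
    proof (intro exI[of _ "max l k1"] allI impI)
      fix k assume k: "max l k1 \<le> k"
      then obtain y where y: "k = k1 + y" by (metis le_add_diff_inverse max.bounded_iff)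
      let ?A = "{q. (q,k) \<in> Gs (2*i)}"
      have "{q. (q,k) \<in> Gs (2 * Suc i)} \<subseteq> ?A - {\<pi> y}"
        using notin[of y] y Gs_anti[of "2*i" "2 * Suc i"] by auto
      then have "card {q. (q,k) \<in> Gs (2 * Suc i)} \<le> card (?A - {\<pi> y})" by (intro card_mono) auto
      also have "\<dots> = card ?A - 1" using inn[of y] y by (simp add: card_Diff_singleton)
      also have "\<dots> \<le> card (UNIV :: 'q set) - Suc i" using l[of k] k by simp
      finally show "card {q. (q,k) \<in> Gs (2 * Suc i)} \<le> card (UNIV :: 'q set) - Suc i" .
    qed
  qed
qed

lemma Gs_top_empty: "Gs (Suc (2 * card (UNIV :: 'q set))) = {}"
proof -
  let ?N = "card (UNIV :: 'q set)"
  obtain l where l: "\<And>k. k \<ge> l \<Longrightarrow> card {q. (q,k) \<in> Gs (2*?N)} \<le> 0"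
    using width[of ?N] by auto
  have e: "(q,k) \<notin> Gs (2*?N)" if "k \<ge> l" for q k
    using l[OF that] by auto
  show ?thesis
  proof (rule ccontr)
    assume "Gs (Suc (2 * ?N)) \<noteq> {}"
    then obtain q k where "(q,k) \<in> Gs (Suc (2*?N))" by auto
    then have "ifin (Gs (2*?N)) q k" using Gs_odd by blast
    then obtain \<pi> where "ipath (Gs (2*?N)) q k \<pi>" by (auto simp: ifin_def)
    then have "(\<pi> l, k+l) \<in> Gs (2*?N)" by (simp add: ipath_def)
    with e show False by simp
  qed
qed

definition rnk :: "'q \<Rightarrow> nat \<Rightarrow> nat" where
  "rnk q k = (LEAST j. (q,k) \<notin> Gs (Suc j))"

lemma rnk_ex: "\<exists>j. (q,k) \<notin> Gs (Suc j)"
  using Gs_top_empty by blast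

lemma rnk_bound: "rnk q k \<le> 2 * card (UNIV :: 'q set)"
  unfolding rnk_def using Gs_top_empty by (intro Least_le) simp

lemma in_Gs_rnk:
  assumes "q \<in> S k"
  shows "(q,k) \<in> Gs j \<longleftrightarrow> j \<le> rnk q k"
proof
  assume a: "(q,k) \<in> Gs j"
  show "j \<le> rnk q k"
  proof (rule ccontr)
    assume "\<not> j \<le> rnk q k"
    then have "Gs j \<subseteq> Gs (Suc (rnk q k))" using Gs_anti by simp
    moreover have "(q,k) \<notin> Gs (Suc (rnk q k))" unfolding rnk_def using LeastI_ex[OF rnk_ex] .
    ultimately show False using a by blast
  qed
next
  assume a: "j \<le> rnk q k"
  show "(q,k) \<in> Gs j"
  proof (cases j)
    case 0 then show ?thesis using assms by simp
  next
    case (Suc j')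
    then have "j' < rnk q k" using a by simp
    then show ?thesis using not_less_Least[of j' "\<lambda>j. (q,k) \<notin> Gs (Suc j)"] Suc by (simp add: rnk_def)
  qed
qed

lemma rnk_F_even:
  assumes "q \<in> F" "q \<in> S k"
  shows "even (rnk q k)"
proof (rule ccontr)
  assume "odd (rnk q k)"
  then obtain i where i: "rnk q k = Suc (2*i)" by (metis oddE Suc_eq_plus1)
  then have "(q,k) \<in> Gs (Suc (2*i))" using in_Gs_rnk[OF assms(2)] by simp
  moreover have "path (Gs (Suc (2*i))) q k (\<lambda>_. q) 0" using calculation by (simp add: path_def eds_def)
  ultimately have "(q,k) \<in> Gs (Suc (Suc (2*i)))" using Gs_even assms(1) unfolding reachF_def by blast
  then show False using in_Gs_rnk[OF assms(2)] i by simp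
qed

lemma rnk_edge:
  assumes "q \<in> S k" "q' \<in> \<delta> q (\<alpha> k)"
  shows "rnk q' (Suc k) \<le> rnk q k"
proof -
  have q': "q' \<in> S (Suc k)" using closed assms .
  have "(q', Suc k) \<in> Gs (rnk q' (Suc k))" using in_Gs_rnk[OF q'] by simp
  then have "(q,k) \<in> Gs (rnk q' (Suc k))" using edge_mono[OF assms] by blast
  then show ?thesis using in_Gs_rnk[OF assms(1)] by simp
qed

lemma rnk_sim:
  assumes "delayed_sim \<delta> F p s" "p \<in> S k" "s \<in> S k"
  shows "rnk p k \<le> rnk s k"
proof -
  have "(p, k) \<in> Gs (rnk p k)" using in_Gs_rnk[OF assms(2)] by simp
  then have "(s,k) \<in> Gs (rnk p k)" using sim_mono assms by blast
  then show ?thesis using in_Gs_rnk[OF assms(3)] by simp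
qed


lemma ffree_ipath:
  assumes "(q1,k1) \<in> Gs (Suc (2*i))" "\<not> reachF (Gs (Suc (2*i))) q1 k1"
  shows "\<exists>\<pi>. ipath (Gs (Suc (2*i))) q1 k1 \<pi> \<and> (\<forall>y. (\<pi> y, k1+y) \<notin> Gs (Suc (Suc (2*i))))"
proof -
  have "ifin (Gs (2*i)) q1 k1" using assms Gs_odd by blast
  then obtain \<pi> where "ipath (Gs (2*i)) q1 k1 \<pi>" by (auto simp: ifin_def)
  then have pi: "ipath (Gs (Suc (2*i))) q1 k1 \<pi>" by (rule ipath_odd)
  have notin: "(\<pi> y, k1+y) \<notin> Gs (Suc (Suc (2*i)))" for y
  proof
    assume "(\<pi> y, k1+y) \<in> Gs (Suc (Suc (2*i)))"
    then have "reachF (Gs (Suc (2*i))) (\<pi> y) (k1+y)" using Gs_even by metis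
    then obtain \<pi>' m where "path (Gs (Suc (2*i))) (\<pi> y) (k1+y) \<pi>' m" "\<pi>' m \<in> F"
      by (auto simp: reachF_def)
    with path_spl[OF ipath_path[OF pi, of y]] have "reachF (Gs (Suc (2*i))) q1 k1"
      unfolding reachF_def by metis
    with assms show False by blast
  qed
  with pi show ?thesis by blast
qed

definition mr :: "nat \<Rightarrow> nat" where
  "mr k = Max ((\<lambda>q. rnk q k) ` S k)"

lemma mr_ge: "q \<in> S k \<Longrightarrow> rnk q k \<le> mr k"
  unfolding mr_def by simp

lemma mr_att: "S k \<noteq> {} \<Longrightarrow> \<exists>q\<in>S k. rnk q k = mr k"
proof -
  assume "S k \<noteq> {}"
  then have "Max ((\<lambda>q. rnk q k) ` S k) \<in> (\<lambda>q. rnk q k) ` S k" by (intro Max_in) auto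
  then show ?thesis unfolding mr_def by auto
qed

lemma breakpoint:
  assumes ev: "even i"
    and Ob: "\<And>k. k \<ge> k0 \<Longrightarrow> Ob k \<noteq> {} \<and> Ob k \<subseteq> S k \<and> (\<forall>q\<in>Ob k. rnk q k = i)"
    and pr: "\<And>k q'. k \<ge> k0 \<Longrightarrow> q' \<in> Ob (Suc k) \<Longrightarrow> \<exists>q\<in>Ob k. q' \<in> \<delta> q (\<alpha> k)"
  shows False
proof -
  have inE: "(q,k) \<in> Gs i" if "k \<ge> k0" "q \<in> Ob k" for q k
  proof -
    have "q \<in> S k" "rnk q k = i" using Ob[OF that(1)] that(2) by auto
    then show ?thesis using in_Gs_rnk by simp
  qed
  have Q: "\<forall>k\<ge>k0. \<exists>q\<in>Ob k. \<exists>\<pi>. path (Gs i) q k \<pi> d" for d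
  proof (induction d)
    case 0
    show ?case
    proof (intro allI impI)
      fix k assume k: "k0 \<le> k"
      then obtain q where "q \<in> Ob k" using Ob by blast
      then show "\<exists>q\<in>Ob k. \<exists>\<pi>. path (Gs i) q k \<pi> 0"
        using inE[OF k] by (intro bexI[of _ q] exI[of _ "\<lambda>_. q"]) (auto simp: path_def eds_def)
    qed
  next
    case (Suc d)
    show ?case
    proof (intro allI impI)
      fix k assume k: "k0 \<le> k"
      then have "Suc k \<ge> k0" by simp
      then obtain q' \<pi> where q': "q' \<in> Ob (Suc k)" "path (Gs i) q' (Suc k) \<pi> d" using Suc.IH by blast
      then obtain q where q: "q \<in> Ob k" "q' \<in> \<delta> q (\<alpha> k)" using pr k by blast
      have "\<pi> 0 = q'" using q' by (simp add: path_def)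
      then have "path (Gs i) q k (pre q \<pi>) (Suc d)" using path_pre[OF inE[OF k q(1)] _ q'(2)] q by simp
      then show "\<exists>q\<in>Ob k. \<exists>\<pi>. path (Gs i) q k \<pi> (Suc d)" using q by blast
    qed
  qed
  have "\<exists>q\<in>Ob k0. \<forall>d. (\<lambda>q d. \<exists>\<pi>. path (Gs i) q k0 \<pi> d) q d"
  proof (rule pigeon_all)
    show "finite (Ob k0)" by simp
    show "\<exists>q\<in>Ob k0. \<exists>\<pi>. path (Gs i) q k0 \<pi> d" for d using Q[of d] by blast
    show "\<exists>\<pi>. path (Gs i) q k0 \<pi> d'" if "\<exists>\<pi>. path (Gs i) q k0 \<pi> d" "d' \<le> d" for q d d'
      using that path_mono by blast
  qed
  then obtain q where q: "q \<in> Ob k0" "\<And>d. \<exists>\<pi>. path (Gs i) q k0 \<pi> d" by blast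
  from konig[OF q(2)] have "ifin (Gs i) q k0" by (simp add: ifin_def)
  then have "(q,k0) \<in> Gs (Suc i)" using inE[OF le_refl q(1)] ev Gs_Suc_even by blast
  moreover have "q \<in> S k0" using Ob[of k0] q(1) by blast
  ultimately have "Suc i \<le> rnk q k0" using in_Gs_rnk by blast
  then show False using Ob[of k0] q(1) by auto
qed

lemma tight_eventually:
  assumes par: "\<And>k p. p \<in> S (Suc k) \<Longrightarrow> \<exists>q\<in>S k. \<exists>s\<in>\<delta> q (\<alpha> k). delayed_sim \<delta> F p s"
    and ne: "\<And>k. S k \<noteq> {}"
  shows "\<exists>l r. odd r \<and> (\<forall>k\<ge>l. mr k = r) \<and> (\<forall>k\<ge>l. \<forall>j. odd j \<and> j \<le> r \<longrightarrow> (\<exists>q\<in>S k. rnk q k = j))"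
proof -
  have dec: "mr (Suc k) \<le> mr k" for k
  proof -
    obtain p where p: "p \<in> S (Suc k)" "rnk p (Suc k) = mr (Suc k)" using mr_att ne by blast
    obtain q s where qs: "q \<in> S k" "s \<in> \<delta> q (\<alpha> k)" "delayed_sim \<delta> F p s" using par[OF p(1)] by blast
    have s: "s \<in> S (Suc k)" using closed qs by blast
    have "rnk p (Suc k) \<le> rnk s (Suc k)" using rnk_sim[OF qs(3) p(1) s] .
    also have "\<dots> \<le> rnk q k" using rnk_edge qs by blast
    also have "\<dots> \<le> mr k" using mr_ge qs by blast
    finally show ?thesis using p by simp
  qed
  obtain l where l: "\<And>k. k \<ge> l \<Longrightarrow> mr k = mr l" using nat_dec_const[of mr] dec by blast
  define r where "r = mr l"
  have odd_r: "odd r"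
  proof
    assume ev: "even r"
    have inE: "(q,k) \<in> Gs r" if "q \<in> S k" "rnk q k = r" for q k
      using in_Gs_rnk that by simp
    have Q: "\<forall>k\<ge>l. \<exists>q\<in>S k. \<exists>\<pi>. path (Gs r) q k \<pi> d" for d
    proof (induction d)
      case 0
      show ?case
      proof (intro allI impI)
        fix k assume k: "l \<le> k"
        obtain q where "q \<in> S k" "rnk q k = mr k" using mr_att ne by blast
        then show "\<exists>q\<in>S k. \<exists>\<pi>. path (Gs r) q k \<pi> 0"
          using inE l[OF k] r_def by (intro bexI[of _ q] exI[of _ "\<lambda>_. q"]) (auto simp: path_def eds_def)
      qed
    next
      case (Suc d)
      show ?case
      proof (intro allI impI)
        fix k assume k: "l \<le> k"
        then have "Suc k \<ge> l" by simp
        then obtain p \<pi> where p: "p \<in> S (Suc k)" "path (Gs r) p (Suc k) \<pi> d" using Suc.IH by blast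
        obtain q s where qs: "q \<in> S k" "s \<in> \<delta> q (\<alpha> k)" "delayed_sim \<delta> F p s" using par[OF p(1)] by blast
        have s: "s \<in> S (Suc k)" using closed qs by blast
        obtain \<pi>' where pi': "path (Gs r) s (Suc k) \<pi>' d" using sim_mono_path[OF qs(3) s p(2)] by blast
        then have "(s, Suc k) \<in> Gs r" by (auto simp: path_def)
        then have "(q,k) \<in> Gs r" using edge_mono qs by blast
        moreover have "\<pi>' 0 \<in> \<delta> q (\<alpha> k)" using pi' qs by (simp add: path_def)
        ultimately have "path (Gs r) q k (pre q \<pi>') (Suc d)" using path_pre pi' by blast
        then show "\<exists>q\<in>S k. \<exists>\<pi>. path (Gs r) q k \<pi> (Suc d)" using qs by blast
      qed
    qed
    have "\<exists>q\<in>S l. \<forall>d. (\<lambda>q d. \<exists>\<pi>. path (Gs r) q l \<pi> d) q d"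
    proof (rule pigeon_all)
      show "finite (S l)" by simp
      show "\<exists>q\<in>S l. \<exists>\<pi>. path (Gs r) q l \<pi> d" for d using Q[of d] by blast
      show "\<exists>\<pi>. path (Gs r) q l \<pi> d'" if "\<exists>\<pi>. path (Gs r) q l \<pi> d" "d' \<le> d" for q d d'
        using that path_mono by blast
    qed
    then obtain q where q: "q \<in> S l" "\<And>d. \<exists>\<pi>. path (Gs r) q l \<pi> d" by blast
    from konig[OF q(2)] have "ifin (Gs r) q l" by (simp add: ifin_def)
    moreover have "(q,l) \<in> Gs r" using q(2)[of 0] by (auto simp: path_def)
    ultimately have "(q,l) \<in> Gs (Suc r)" using ev Gs_Suc_even by blast
    then have "Suc r \<le> rnk q l" using in_Gs_rnk q(1) by blast
    moreover have "rnk q l \<le> r" using mr_ge[OF q(1)] r_def by simp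
    ultimately show False by simp
  qed
  have each: "\<exists>l'. \<forall>k\<ge>l'. \<exists>q\<in>S k. rnk q k = j" if j: "odd j" "j \<le> r" for j
  proof -
    obtain i where "j = 2*i+1" using j(1) by (rule oddE)
    then have ji: "j = Suc (2*i)" by simp
    obtain q where q: "q \<in> S l" "rnk q l = r" using mr_att ne r_def by blast
    then have "(q,l) \<in> Gs j" using in_Gs_rnk j(2) by simp
    then obtain q1 k1 where q1: "(q1,k1) \<in> Gs (Suc (2*i))" "\<not> reachF (Gs (Suc (2*i))) q1 k1"
      using Ffree_exists ji by blast
    obtain \<pi> where pi: "ipath (Gs (Suc (2*i))) q1 k1 \<pi>" "\<And>y. (\<pi> y, k1+y) \<notin> Gs (Suc (Suc (2*i)))"
      using ffree_ipath[OF q1] by blast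
    have "\<exists>q\<in>S k. rnk q k = j" if "k \<ge> k1" for k
    proof -
      obtain y where y: "k = k1 + y" using \<open>k \<ge> k1\<close> le_Suc_ex by blast
      have a: "(\<pi> y, k) \<in> Gs j" using pi(1) y ji by (simp add: ipath_def)
      then have b: "\<pi> y \<in> S k" using Gs_S by blast
      have "(\<pi> y, k) \<notin> Gs (Suc j)" using pi(2)[of y] y ji by simp
      then show ?thesis using a b in_Gs_rnk[OF b] by (intro bexI[of _ "\<pi> y"]) auto
    qed
    then show ?thesis by blast
  qed
  have "\<exists>L. \<forall>j<Suc r. \<forall>k\<ge>L. (odd j \<longrightarrow> (\<exists>q\<in>S k. rnk q k = j))"
  proof (rule fin_max_choice)
    fix j assume j: "j < Suc r"
    show "\<exists>l. \<forall>k\<ge>l. odd j \<longrightarrow> (\<exists>q\<in>S k. rnk q k = j)"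
    proof (cases "odd j")
      case True
      then obtain l' where "\<forall>k\<ge>l'. \<exists>q\<in>S k. rnk q k = j" using each j by (meson less_Suc_eq_le)
      then show ?thesis by blast
    next
      case False then show ?thesis by blast
    qed
  qed
  then obtain L where L: "\<forall>j<Suc r. \<forall>k\<ge>L. (odd j \<longrightarrow> (\<exists>q\<in>S k. rnk q k = j))" by blast
  have A: "\<forall>k\<ge>max l L. mr k = r"
  proof (intro allI impI)
    fix k assume "max l L \<le> k"
    then have "l \<le> k" by simp
    then have "mr k = mr l" using l by blast
    then show "mr k = r" using r_def by simp
  qed
  have B: "\<forall>k\<ge>max l L. \<forall>j. odd j \<and> j \<le> r \<longrightarrow> (\<exists>q\<in>S k. rnk q k = j)"
    using L by auto
  show ?thesis using odd_r A B by blast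
qed

end

definition gd :: "('q::finite, 'a) trans \<Rightarrow> ('q set \<Rightarrow> 'q set) \<Rightarrow> 'q macro set \<Rightarrow> ('q bstate, 'a) trans" where
  "gd \<delta> g X s a = (case s of
     Inl S \<Rightarrow> {Inl (g (dset \<delta> S a))}
              \<union> {Inr (S', {}, f, 0) | S' f. (S', {}, f, 0) \<in> X \<and> S' = g (dset \<delta> S a)}
   | Inr m \<Rightarrow> (if m \<in> X then
       {Inr m' | m'. m' \<in> X \<and> fst m' = g (dset \<delta> (fst m) a) \<and> step3_ok \<delta> m a m'}
       else {}))"

lemma sat_gd: "sat_delta \<delta> F X = gd \<delta> (str \<delta> F) X"
  by (intro ext) (simp add: sat_delta_def gd_def)

lemma schewe_gd: "schewe_delta \<delta> F = gd \<delta> id (Q2 F)"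
proof (intro ext)
  fix s a
  show "schewe_delta \<delta> F s a = gd \<delta> id (Q2 F) s a"
  proof (cases s)
    case (Inl S)
    then show ?thesis by (auto simp: schewe_delta_def gd_def Q2_def)
  next
    case (Inr m)
    then show ?thesis by (auto simp: schewe_delta_def gd_def Q2_def)
  qed
qed

lemma schewe_final_eq: "schewe_final F = sat_final (Q2 F)"
  by (simp add: schewe_final_def sat_final_def)

lemma delayed_refl:
  assumes "complete \<delta>"
  shows "delayed_sim \<delta> F p p"
proof -
  define \<sigma> where "\<sigma> = (\<lambda>r (p::'a) a p'. if p' \<in> \<delta> r a then p' else (SOME x. x \<in> \<delta> r a))"
  have ds: "dup_strategy \<delta> \<sigma>"
    unfolding dup_strategy_def \<sigma>_def using assms by (auto simp: complete_def some_in_eq)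
  have "dup_play \<sigma> p \<rho> \<alpha> i = \<rho> i" if "is_run \<delta> p \<alpha> \<rho>" for \<alpha> \<rho> i
    using that by (induction i) (auto simp: is_run_def \<sigma>_def)
  then show ?thesis unfolding delayed_sim_def using ds by (metis order_refl)
qed

lemma direct_delayed: "direct_sim \<delta> F p q \<Longrightarrow> delayed_sim \<delta> F p q"
  unfolding direct_sim_def delayed_sim_def by (metis order_refl)


definition Sc :: "'q bstate \<Rightarrow> 'q set" where
  "Sc b = (case b of Inl S \<Rightarrow> S | Inr m \<Rightarrow> fst m)"

lemma gd_Sc: "b' \<in> gd \<delta> g X b a \<Longrightarrow> Sc b' = g (dset \<delta> (Sc b) a)"
  by (cases b) (auto simp: gd_def Sc_def split: if_splits)

lemma gd_Inr: "b' \<in> gd \<delta> g X (Inr m) a \<Longrightarrow>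
   m \<in> X \<and> (\<exists>m'. b' = Inr m' \<and> m' \<in> X \<and> fst m' = g (dset \<delta> (fst m) a) \<and> step3_ok \<delta> m a m')"
  by (auto simp: gd_def split: if_splits)

lemma step3_unf: "step3_ok \<delta> (S,Ob,f,i) a (S',Ob',f',i') \<longleftrightarrow>
      (\<forall>q\<in>S. \<forall>q'\<in>\<delta> q a. f' q' \<le> f q) \<and> rank f = rank f'
      \<and> ((Ob = {} \<and> i' = (i + 2) mod (rank f' + 1) \<and> Ob' = S' \<inter> f' -` {i'})
         \<or> (Ob \<noteq> {} \<and> i' = i \<and> Ob' = dset \<delta> Ob a \<inter> f' -` {i}))"
  by (simp add: step3_ok_def)

lemma dset_mem: "q \<in> P \<Longrightarrow> q' \<in> \<delta> q a \<Longrightarrow> q' \<in> dset \<delta> P a"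
  by (auto simp: dset_def)

lemma rank_ge: "f q \<le> rank (f :: 'q::finite \<Rightarrow> nat)"
  unfolding rank_def by simp

lemma mod_step:
  fixes i c r :: nat
  assumes "even i" "even c" "odd r" "i \<le> r" "c \<le> r"
  shows "(i + 2) mod (r + 1) = (if i + 2 \<le> r then i + 2 else 0)"
proof (cases "i + 2 \<le> r")
  case True then show ?thesis by simp
next
  case False
  then have "i + 2 = r + 1" using assms by presburger
  then show ?thesis using False by simp
qed

lemma phi_dec:
  fixes i c r :: nat
  assumes "even i" "even c" "odd r" "i \<le> r" "c \<le> r" "i \<noteq> c" "(i + 2) mod (r + 1) \<noteq> c"
  defines "\<phi> \<equiv> (\<lambda>x. if x \<le> c then c - x else c + (r+1) - x)"
  shows "\<phi> ((i + 2) mod (r + 1)) < \<phi> i"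
proof -
  obtain a where a: "i = 2*a" using assms(1) by blast
  obtain b where b: "c = 2*b" using assms(2) by blast
  obtain d where d: "r = 2*d+1" using assms(3) oddE by blast
  show ?thesis
  proof (cases "i + 2 \<le> r")
    case True
    then have m: "(i+2) mod (r+1) = i+2" by simp
    have "i + 2 \<noteq> c" using assms(7) m by simp
    then show ?thesis using assms(5,6) True unfolding m \<phi>_def a b d by auto
  next
    case False
    then have "i + 2 = r+1" using a d assms(4) by presburger
    then have m: "(i+2) mod (r+1) = 0" by simp
    have "c \<noteq> 0" using assms(7) m by simp
    then show ?thesis using assms(4,5,6) False \<open>i + 2 = r+1\<close> unfolding m \<phi>_def a b d by auto
  qed
qed

lemma dec_potential:
  fixes \<psi> :: "nat \<Rightarrow> nat"
  assumes mono: "\<And>k. k \<ge> a \<Longrightarrow> \<psi> (Suc k) \<le> \<psi> k"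
    and inf: "\<And>N. \<exists>k\<ge>N. \<psi> (Suc k) < \<psi> k"
  shows False
proof -
  have mono2: "\<psi> k' \<le> \<psi> k" if "a \<le> k" "k \<le> k'" for k k'
    using that(2)
  proof (induction k' rule: dec_induct)
    case base then show ?case by simp
  next
    case (step m) then show ?case using mono[of m] that(1) by linarith
  qed
  have "\<exists>k\<ge>a. \<psi> k + n \<le> \<psi> a" for n
  proof (induction n)
    case 0 then show ?case by auto
  next
    case (Suc n)
    then obtain k where k: "k \<ge> a" "\<psi> k + n \<le> \<psi> a" by blast
    obtain k' where k': "k' \<ge> k" "\<psi> (Suc k') < \<psi> k'" using inf by blast
    have "\<psi> k' \<le> \<psi> k" using mono2 k k' by blast
    then show ?case using k k' by (intro exI[of _ "Suc k'"]) auto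
  qed
  then obtain k where "\<psi> k + Suc (\<psi> a) \<le> \<psi> a" by blast
  then show False by simp
qed


lemma INFM_ex: "(\<exists>\<^sub>\<infinity>k. P k) \<Longrightarrow> \<exists>k\<ge>N. P (k::nat)"
  by (simp add: INFM_nat_le)

lemma sound:
  assumes ext: "\<And>S. S \<subseteq> g S" and XQ: "X \<subseteq> Q2 F"
    and acc: "\<alpha> \<in> lang (gd \<delta> g X) {Inl I} (sat_final X)"
  shows "\<alpha> \<notin> lang \<delta> I F"
proof
  assume "\<alpha> \<in> lang \<delta> I F"
  then obtain q0 \<rho> qf where r: "is_run \<delta> q0 \<alpha> \<rho>" "qf \<in> F" "\<exists>\<^sub>\<infinity>i. \<rho> i = qf" "q0 \<in> I"
    by (auto simp: lang_def accepting_def)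
  from acc obtain \<rho>B b where rB: "is_run (gd \<delta> g X) (Inl I) \<alpha> \<rho>B" "b \<in> sat_final X" "\<exists>\<^sub>\<infinity>k. \<rho>B k = b"
    by (auto simp: lang_def accepting_def)
  have trans: "\<rho>B (Suc k) \<in> gd \<delta> g X (\<rho>B k) (\<alpha> k)" for k using rB(1) by (simp add: is_run_def)
  have inS: "\<rho> k \<in> Sc (\<rho>B k)" for k
  proof (induction k)
    case 0 then show ?case using r(1,4) rB(1) by (simp add: is_run_def Sc_def)
  next
    case (Suc k)
    have "\<rho> (Suc k) \<in> dset \<delta> (Sc (\<rho>B k)) (\<alpha> k)" using Suc r(1) by (auto simp: is_run_def dset_def)
    then show ?case using gd_Sc[OF trans[of k]] ext by auto
  qed
  show False
  proof (cases b)
    case (Inl S0)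
    then have "b = Inl {}" using rB(2) by (auto simp: sat_final_def)
    then obtain k where "\<rho>B k = Inl {}" using INFM_ex[OF rB(3)] by blast
    then show False using inS[of k] by (simp add: Sc_def)
  next
    case (Inr mb)
    obtain k1 where k1: "\<rho>B k1 = b" using INFM_ex[OF rB(3)] by blast
    have isInr: "\<exists>m. \<rho>B k = Inr m" if "k \<ge> k1" for k
      using that
    proof (induction k rule: dec_induct)
      case base then show ?case using k1 Inr by blast
    next
      case (step k)
      then obtain m where "\<rho>B k = Inr m" by blast
      then show ?case using gd_Inr trans[of k] by metis
    qed
    define m where "m = (\<lambda>k. projr (\<rho>B k))"
    have mk: "\<rho>B k = Inr (m k)" if "k \<ge> k1" for k using isInr[OF that] m_def by auto
    have stp: "m k \<in> X \<and> m (Suc k) \<in> X \<and> fst (m (Suc k)) = g (dset \<delta> (fst (m k)) (\<alpha> k))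
               \<and> step3_ok \<delta> (m k) (\<alpha> k) (m (Suc k))" if "k \<ge> k1" for k
    proof -
      have "\<rho>B (Suc k) \<in> gd \<delta> g X (Inr (m k)) (\<alpha> k)" using trans[of k] mk[OF that] by simp
      from gd_Inr[OF this] show ?thesis using mk[of "Suc k"] that by auto
    qed
    define Sk where "Sk = (\<lambda>k. fst (m k))"
    define Ok where "Ok = (\<lambda>k. fst (snd (m k)))"
    define fk where "fk = (\<lambda>k. fst (snd (snd (m k))))"
    define ik where "ik = (\<lambda>k. snd (snd (snd (m k))))"
    have meq: "m k = (Sk k, Ok k, fk k, ik k)" for k by (simp add: Sk_def Ok_def fk_def ik_def)
    have Q2k: "tight F (Sk k) (fk k) \<and> even (ik k) \<and> Ok k \<subseteq> Sk k \<inter> fk k -` {ik k}" if "k \<ge> k1" for k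
      using stp[OF that] XQ meq[of k] by (auto simp: Q2_def)
    have s3: "(\<forall>q\<in>Sk k. \<forall>q'\<in>\<delta> q (\<alpha> k). fk (Suc k) q' \<le> fk k q) \<and> rank (fk k) = rank (fk (Suc k))
      \<and> ((Ok k = {} \<and> ik (Suc k) = (ik k + 2) mod (rank (fk (Suc k)) + 1) \<and> Ok (Suc k) = Sk (Suc k) \<inter> fk (Suc k) -` {ik (Suc k)})
         \<or> (Ok k \<noteq> {} \<and> ik (Suc k) = ik k \<and> Ok (Suc k) = dset \<delta> (Ok k) (\<alpha> k) \<inter> fk (Suc k) -` {ik k}))"
      if "k \<ge> k1" for k
      using stp[OF that] meq[of k] meq[of "Suc k"] step3_unf by metis
    have rhoS: "\<rho> k \<in> Sk k" if "k \<ge> k1" for k using inS[of k] mk[OF that] by (simp add: Sc_def Sk_def)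
    have redge: "\<rho> (Suc k) \<in> \<delta> (\<rho> k) (\<alpha> k)" for k using r(1) by (simp add: is_run_def)
    define r0 where "r0 = rank (fk k1)"
    have rk: "rank (fk k) = r0" if "k \<ge> k1" for k
      using that
    proof (induction k rule: dec_induct)
      case base then show ?case by (simp add: r0_def)
    next
      case (step k) then show ?case using s3[of k] by simp
    qed
    have oddr: "odd r0" using Q2k[of k1] by (simp add: tight_def r0_def)
    have "\<exists>j2. \<forall>j\<ge>j2. fk (k1+j) (\<rho> (k1+j)) = fk (k1+j2) (\<rho> (k1+j2))"
    proof (rule nat_dec_const)
      fix j
      have e: "\<forall>q\<in>Sk (k1+j). \<forall>q'\<in>\<delta> q (\<alpha> (k1+j)). fk (Suc (k1+j)) q' \<le> fk (k1+j) q"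
        using s3[of "k1+j"] le_add1 by blast
      have r1: "\<rho> (k1+j) \<in> Sk (k1+j)" using rhoS le_add1 by blast
      have "fk (Suc (k1+j)) (\<rho> (Suc (k1 + j))) \<le> fk (k1 + j) (\<rho> (k1 + j))"
        using e r1 redge[of "k1+j"] by blast
      then show "fk (k1 + Suc j) (\<rho> (k1 + Suc j)) \<le> fk (k1 + j) (\<rho> (k1 + j))" by simp
    qed
    then obtain j2 where j2: "\<forall>j\<ge>j2. fk (k1+j) (\<rho> (k1+j)) = fk (k1+j2) (\<rho> (k1+j2))" ..
    define k2 where "k2 = k1 + j2"
    define c where "c = fk k2 (\<rho> k2)"
    have cval: "fk k (\<rho> k) = c" if "k \<ge> k2" for k
    proof -
      define j where "j = k - k1"
      have jj: "k = k1 + j" "j \<ge> j2" using that by (simp_all add: j_def k2_def)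
      have "fk (k1+j) (\<rho> (k1+j)) = fk (k1+j2) (\<rho> (k1+j2))" using j2 jj(2) by blast
      then show ?thesis using jj(1) c_def k2_def by simp
    qed
    have k12: "k1 \<le> k2" by (simp add: k2_def)
    obtain kf where kf: "kf \<ge> k2" "\<rho> kf = qf" using INFM_ex[OF r(3)] by blast
    have evc: "even c"
    proof -
      have "is_ranking F (fk kf)" using Q2k[of kf] kf k12 by (simp add: tight_def)
      then have "even (fk kf qf)" using r(2) by (simp add: is_ranking_def)
      then show ?thesis using cval[OF kf(1)] kf(2) by simp
    qed
    have cr: "c \<le> r0" using cval[of k2] rank_ge[of "fk k2" "\<rho> k2"] rk[OF k12] by simp
    have resets: "\<exists>k\<ge>N. Ok k = {}" if "N \<ge> k1" for N
    proof -
      obtain k where k: "k \<ge> N" "\<rho>B k = b" using INFM_ex[OF rB(3)] by blast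
      then have "Inr (m k) = b" using mk[of k] that by simp
      then have "Ok k = {}" using rB(2) Inr by (auto simp: sat_final_def Ok_def)
      then show ?thesis using k by blast
    qed
    have a: "ik (Suc k) \<noteq> c" if "k \<ge> k2" "Ok k = {}" for k
    proof
      assume ic: "ik (Suc k) = c"
      have inv: "\<rho> j \<in> Ok j \<and> ik j = c" if "j \<ge> Suc k" for j
        using that
      proof (induction j rule: dec_induct)
        case base
        have "Ok (Suc k) = Sk (Suc k) \<inter> fk (Suc k) -` {ik (Suc k)}" using s3[of k] \<open>Ok k = {}\<close> \<open>k \<ge> k2\<close> k12 by auto
        then show ?case using ic rhoS[of "Suc k"] cval[of "Suc k"] \<open>k \<ge> k2\<close> k12 by auto
      next
        case (step j)
        then have j1: "j \<ge> k1" "j \<ge> k2" using \<open>k \<ge> k2\<close> k12 by auto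
        have "Ok j \<noteq> {}" using step by auto
        then have "ik (Suc j) = ik j \<and> Ok (Suc j) = dset \<delta> (Ok j) (\<alpha> j) \<inter> fk (Suc j) -` {ik j}" using s3[OF j1(1)] by auto
        moreover have "\<rho> (Suc j) \<in> dset \<delta> (Ok j) (\<alpha> j)" using step redge[of j] by (auto intro: dset_mem)
        moreover have "fk (Suc j) (\<rho> (Suc j)) = c" using cval j1 by simp
        ultimately show ?case using step by auto
      qed
      obtain k' where "k' \<ge> Suc k" "Ok k' = {}" using resets[of "Suc k"] \<open>k \<ge> k2\<close> k12 by auto
      then show False using inv by blast
    qed
    obtain t0 where t0: "t0 \<ge> k2" "Ok t0 = {}" using resets[of k2] k12 by blast
    have b2: "ik k \<noteq> c \<and> ik k \<le> r0" if "k \<ge> Suc t0" for k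
      using that
    proof (induction k rule: dec_induct)
      case base
      have "ik (Suc t0) = (ik t0 + 2) mod (r0 + 1)" using s3[of t0] t0 k12 rk[of "Suc t0"] by auto
      then show ?case using a[OF t0] by simp
    next
      case (step k)
      then have kk: "k \<ge> k1" "k \<ge> k2" using t0 k12 by auto
      show ?case
      proof (cases "Ok k = {}")
        case True
        then have "ik (Suc k) = (ik k + 2) mod (r0 + 1)" using s3[OF kk(1)] rk[of "Suc k"] kk by auto
        then show ?thesis using a[OF kk(2) True] by simp
      next
        case False
        then show ?thesis using s3[OF kk(1)] step by auto
      qed
    qed
    define \<phi> where "\<phi> = (\<lambda>x. if x \<le> c then c - x else c + (r0+1) - x)"
    show False
    proof (rule dec_potential[of "Suc t0" "\<lambda>k. \<phi> (ik k)"])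
      fix k assume k: "Suc t0 \<le> k"
      then have kk: "k \<ge> k1" "k \<ge> k2" using t0 k12 by auto
      show "\<phi> (ik (Suc k)) \<le> \<phi> (ik k)"
      proof (cases "Ok k = {}")
        case True
        then have e: "ik (Suc k) = (ik k + 2) mod (r0 + 1)" using s3[OF kk(1)] rk[of "Suc k"] kk by auto
        have "\<phi> ((ik k + 2) mod (r0 + 1)) < \<phi> (ik k)" unfolding \<phi>_def
          by (rule phi_dec) (use Q2k[OF kk(1)] evc oddr b2[OF k] b2[of "Suc k"] k cr e in auto)
        then show ?thesis using e by simp
      next
        case False
        then show ?thesis using s3[OF kk(1)] by auto
      qed
    next
      fix N
      have "max N (Suc t0) \<ge> k1" using t0 k12 by simp
      then obtain k where k: "k \<ge> max N (Suc t0)" "Ok k = {}" using resets[of "max N (Suc t0)"] by blast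
      then have kk: "k \<ge> k1" "k \<ge> k2" "k \<ge> Suc t0" using t0 k12 by auto
      have e: "ik (Suc k) = (ik k + 2) mod (r0 + 1)" using s3[OF kk(1)] rk[of "Suc k"] kk k by auto
      have "\<phi> ((ik k + 2) mod (r0 + 1)) < \<phi> (ik k)" unfolding \<phi>_def
        by (rule phi_dec) (use Q2k[OF kk(1)] evc oddr b2[OF kk(3)] b2[of "Suc k"] kk cr e in auto)
      then show "\<exists>k\<ge>N. \<phi> (ik (Suc k)) < \<phi> (ik k)" using e k by (intro exI[of _ k]) auto
    qed
  qed
qed


lemma infF_acc:
  fixes \<pi> :: "nat \<Rightarrow> 'q::finite"
  assumes "\<forall>i. \<exists>j\<ge>i. \<pi> j \<in> F"
  shows "\<exists>q\<in>F. \<exists>\<^sub>\<infinity>j. \<pi> j = q"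
proof -
  let ?A = "{j. \<pi> j \<in> F}"
  have "infinite ?A" using assms by (simp add: infinite_nat_iff_unbounded_le)
  moreover have "finite (\<pi> ` ?A)" by simp
  ultimately obtain y where y: "y \<in> \<pi> ` ?A" "infinite (\<pi> -` {y} \<inter> ?A)" using inf_img_fin_dom' by blast
  have "\<pi> -` {y} \<inter> ?A \<subseteq> {j. \<pi> j = y}" by auto
  then have "infinite {j. \<pi> j = y}" using y(2) finite_subset by blast
  then have "\<exists>\<^sub>\<infinity>j. \<pi> j = y" by (simp add: INFM_iff_infinite)
  then show ?thesis using y(1) by blast
qed

fun obf :: "('q, 'a) trans \<Rightarrow> (nat \<Rightarrow> 'q set) \<Rightarrow> (nat \<Rightarrow> 'q \<Rightarrow> nat) \<Rightarrow> (nat \<Rightarrow> 'a) \<Rightarrow> nat \<Rightarrow> nat \<Rightarrow> nat \<Rightarrow> 'q set \<times> nat" where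
  "obf \<delta> S f \<alpha> r L 0 = ({}, 0)"
| "obf \<delta> S f \<alpha> r L (Suc m) = (case obf \<delta> S f \<alpha> r L m of (Ob, i) \<Rightarrow>
     if Ob = {} then (S (L + Suc m) \<inter> f (L + Suc m) -` {(i+2) mod (r+1)}, (i+2) mod (r+1))
     else (dset \<delta> Ob (\<alpha> (L+m)) \<inter> f (L + Suc m) -` {i}, i))"

lemma finite_bounded_funs: "finite {f :: 'q::finite \<Rightarrow> nat. \<forall>q. f q \<le> M}"
proof -
  have "{f :: 'q \<Rightarrow> nat. \<forall>q. f q \<le> M} = {f. \<forall>x. (x \<in> UNIV \<longrightarrow> f x \<in> {..M}) \<and> (x \<notin> UNIV \<longrightarrow> f x = 0)}"
    by auto
  then show ?thesis using finite_set_of_finite_funs[of "UNIV :: 'q set" "{..M}" 0] by simp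
qed

lemma compl:
  fixes \<delta> :: "('q::finite, 'a) trans"
  assumes cpl: "complete \<delta>"
    and ext: "\<And>S. S \<subseteq> g S"
    and gpar: "\<And>S p. p \<in> g S \<Longrightarrow> \<exists>s\<in>S. delayed_sim \<delta> F p s"
    and hX: "\<And>S Ob f i. (S,Ob,f,i) \<in> Q2 F \<Longrightarrow> (\<forall>p\<in>S. \<forall>q\<in>S. delayed_sim \<delta> F p q \<longrightarrow> f p \<le> f q) \<Longrightarrow> (S,Ob,f,i) \<in> X"
    and nacc: "\<alpha> \<notin> lang \<delta> I F"
  shows "\<alpha> \<in> lang (gd \<delta> g X) {Inl I} (sat_final X)"
proof -
  define S where "S = rec_nat I (\<lambda>k T. g (dset \<delta> T (\<alpha> k)))"
  have S0: "S 0 = I" by (simp add: S_def)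
  have SS: "S (Suc k) = g (dset \<delta> (S k) (\<alpha> k))" for k by (simp add: S_def)
  have closed: "q' \<in> S (Suc k)" if "q \<in> S k" "q' \<in> \<delta> q (\<alpha> k)" for q q' k
    using dset_mem[of q "S k" q' \<delta> "\<alpha> k"] that ext SS by blast
  interpret D: dag \<delta> F \<alpha> S using cpl closed by unfold_locales auto
  have par: "\<exists>q\<in>S k. \<exists>s\<in>\<delta> q (\<alpha> k). delayed_sim \<delta> F p s" if p: "p \<in> S (Suc k)" for k p
  proof -
    have "p \<in> g (dset \<delta> (S k) (\<alpha> k))" using p SS by simp
    then obtain s where "s \<in> dset \<delta> (S k) (\<alpha> k)" "delayed_sim \<delta> F p s" using gpar by blast
    then show ?thesis by (auto simp: dset_def)
  qed
  have rej: "\<not> (\<forall>i. \<exists>j\<ge>i. \<pi> j \<in> F)" if "D.ieds k \<pi>" "\<pi> 0 \<in> S k" for k \<pi>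
    using that
  proof (induction k arbitrary: \<pi>)
    case 0
    show ?case
    proof
      assume inf: "\<forall>i. \<exists>j\<ge>i. \<pi> j \<in> F"
      have "is_run \<delta> (\<pi> 0) \<alpha> \<pi>" using D.ieds_run[OF 0(1)] by simp
      moreover have "\<pi> 0 \<in> I" using 0(2) S0 by simp
      ultimately have "\<alpha> \<in> lang \<delta> I F" using infF_acc[OF inf] by (auto simp: lang_def accepting_def)
      with nacc show False by blast
    qed
  next
    case (Suc k)
    show ?case
    proof
      assume inf: "\<forall>i. \<exists>j\<ge>i. \<pi> j \<in> F"
      obtain q s where qs: "q \<in> S k" "s \<in> \<delta> q (\<alpha> k)" "delayed_sim \<delta> F (\<pi> 0) s" using par[OF Suc(3)] by blast
      obtain \<sigma> where str: "dup_strategy \<delta> \<sigma>" and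
        win: "\<forall>\<alpha>' \<rho>'. is_run \<delta> (\<pi> 0) \<alpha>' \<rho>' \<longrightarrow> (\<forall>i. \<rho>' i \<in> F \<longrightarrow> (\<exists>k'\<ge>i. dup_play \<sigma> s \<rho>' \<alpha>' k' \<in> F))"
        using qs(3) by (auto simp: delayed_sim_def)
      let ?d = "dup_play \<sigma> s \<pi> (\<lambda>x. \<alpha> (Suc k + x))"
      have ied: "D.ieds (Suc k) ?d" using D.dup_ieds[OF str Suc(2)] .
      have d0: "?d 0 = s" by simp
      have sS: "s \<in> S (Suc k)" using closed qs by blast
      have ip: "D.ipath (D.Gs 0) s (Suc k) ?d" using D.ieds_in_S[OF ied] d0 sS ied by (simp add: D.ipath_def)
      have qG: "(q,k) \<in> D.Gs 0" using qs by simp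
      have "D.ipath (D.Gs 0) q k (D.pre q ?d)" using D.ipath_pre[OF qG _ ip] qs d0 by simp
      then have ie2: "D.ieds k (D.pre q ?d)" and p0: "D.pre q ?d 0 \<in> S k" using qs by (auto simp: D.ipath_def)
      have "\<forall>i. \<exists>j\<ge>i. D.pre q ?d j \<in> F"
      proof
        fix i
        obtain j where j: "j \<ge> i" "\<pi> j \<in> F" using inf by blast
        have "is_run \<delta> (\<pi> 0) (\<lambda>x. \<alpha> (Suc k + x)) \<pi>" using D.ieds_run[OF Suc(2)] .
        then obtain k' where "k' \<ge> j" "?d k' \<in> F" using win j by blast
        then show "\<exists>j\<ge>i. D.pre q ?d j \<in> F" using j by (intro exI[of _ "Suc k'"]) simp
      qed
      then show False using Suc.IH[OF ie2 p0] by blast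
    qed
  qed
  interpret R: rdag \<delta> F \<alpha> S using rej by unfold_locales blast
  let ?N = "card (UNIV :: 'q set)"
  show ?thesis
  proof (cases "\<exists>k0. S k0 = {}")
    case True
    then obtain k0 where k0: "S k0 = {}" by blast
    have emp: "S k = {}" if "k \<ge> k0" for k
      using that
    proof (induction k rule: dec_induct)
      case base then show ?case using k0 .
    next
      case (step k) then show ?case using par by blast
    qed
    define \<rho>B where "\<rho>B = (\<lambda>k. Inl (S k) :: 'q bstate)"
    have "is_run (gd \<delta> g X) (Inl I) \<alpha> \<rho>B"
      unfolding is_run_def \<rho>B_def using S0 SS by (auto simp: gd_def)
    moreover have "accepting (sat_final X) \<rho>B"
    proof -
      have "\<exists>\<^sub>\<infinity>k. \<rho>B k = Inl {}" unfolding INFM_nat_le \<rho>B_def using emp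
        by (metis le_add2 add.commute le_add1 nat_le_linear)
      then show ?thesis by (auto simp: accepting_def sat_final_def)
    qed
    ultimately show ?thesis by (auto simp: lang_def)
  next
    case False
    then have ne: "\<And>k. S k \<noteq> {}" by blast
    obtain l r where lr: "odd r" "\<forall>k\<ge>l. R.mr k = r"
        "\<forall>k\<ge>l. \<forall>j. odd j \<and> j \<le> r \<longrightarrow> (\<exists>q\<in>S k. R.rnk q k = j)"
      using R.tight_eventually[OF par ne] by blast
    define L where "L = Suc l"
    define fk where "fk = (\<lambda>k q. if q \<in> S k then R.rnk q k else 0)"
    have rle: "r \<le> 2 * ?N"
    proof -
      obtain q where "q \<in> S l" "R.rnk q l = r" using lr(1,3) by blast
      then show ?thesis using R.rnk_bound by metis
    qed
    have fk_le: "fk k q \<le> r" if "k \<ge> L" for k q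
    proof (cases "q \<in> S k")
      case True
      then have "R.rnk q k \<le> R.mr k" by (rule R.mr_ge)
      then show ?thesis using lr(2) that True by (simp add: fk_def L_def)
    next
      case False then show ?thesis by (simp add: fk_def)
    qed
    have rankk: "rank (fk k) = r" if kk: "k \<ge> L" for k
    proof -
      have "k \<ge> l" using kk L_def by simp
      then obtain q where q: "q \<in> S k" "R.rnk q k = r" using lr(1,3) by blast
      have ub: "\<And>y. y \<in> range (fk k) \<Longrightarrow> y \<le> r" using fk_le[OF kk] by auto
      have "fk k q = r" using q by (simp add: fk_def)
      then have mem: "r \<in> range (fk k)" by (metis rangeI)
      have "Max (range (fk k)) = r" using Max_eqI[of "range (fk k)" r] ub mem by simp
      then show ?thesis by (simp add: rank_def)
    qed
    have tk: "tight F (S k) (fk k)" if "k \<ge> L" for k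
    proof -
      have "is_ranking F (fk k)"
        unfolding is_ranking_def fk_def using R.rnk_bound R.rnk_F_even by auto
      moreover have "{j. odd j \<and> j \<le> rank (fk k)} \<subseteq> fk k ` S k"
      proof
        fix j assume "j \<in> {j. odd j \<and> j \<le> rank (fk k)}"
        then have j: "odd j" "j \<le> r" using rankk[OF that] by auto
        have "k \<ge> l" using that L_def by simp
        then obtain q where q: "q \<in> S k" "R.rnk q k = j" using lr(3) j by blast
        then have "fk k q = j" by (simp add: fk_def)
        then show "j \<in> fk k ` S k" using q(1) by blast
      qed
      ultimately show ?thesis unfolding tight_def using rankk[OF that] lr(1) by (simp add: fk_def)
    qed
    have tkU: "tight F UNIV (fk k)" if "k \<ge> L" for k
      using tk[OF that] unfolding tight_def by blast
    have fedge: "fk (Suc k) q' \<le> fk k q" if "q \<in> S k" "q' \<in> \<delta> q (\<alpha> k)" for k q q'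
      using R.rnk_edge[OF that] closed[OF that] that by (simp add: fk_def)
    have fsim: "fk k p \<le> fk k q" if "p \<in> S k" "q \<in> S k" "delayed_sim \<delta> F p q" for k p q
      using R.rnk_sim[OF that(3,1,2)] that by (simp add: fk_def)
    define Ok where "Ok = (\<lambda>k. fst (obf \<delta> S fk \<alpha> r L (k - L)))"
    define ik where "ik = (\<lambda>k. snd (obf \<delta> S fk \<alpha> r L (k - L)))"
    have OkL: "Ok L = {}" "ik L = 0" by (simp_all add: Ok_def ik_def)
    have Ostep: "(Ok k = {} \<and> ik (Suc k) = (ik k + 2) mod (r + 1) \<and> Ok (Suc k) = S (Suc k) \<inter> fk (Suc k) -` {ik (Suc k)})
         \<or> (Ok k \<noteq> {} \<and> ik (Suc k) = ik k \<and> Ok (Suc k) = dset \<delta> (Ok k) (\<alpha> k) \<inter> fk (Suc k) -` {ik k})"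
      if kL: "k \<ge> L" for k
    proof -
      obtain m where m: "k = L + m" using kL le_Suc_ex by blast
      then have e1: "Suc k - L = Suc m" "k - L = m" by simp_all
      show ?thesis
        unfolding Ok_def ik_def e1 using m
        by (cases "obf \<delta> S fk \<alpha> r L m") (auto simp: Let_def)
    qed
    have OI: "Ok k \<subseteq> S k \<inter> fk k -` {ik k} \<and> even (ik k) \<and> ik k < r" if "k \<ge> L" for k
      using that
    proof (induction k rule: dec_induct)
      case base
      have "0 < r" using lr(1) by (metis odd_pos)
      then show ?case using OkL by simp
    next
      case (step k)
      show ?case
      proof (cases "Ok k = {}")
        case True
        then have e: "ik (Suc k) = (ik k + 2) mod (r + 1)" "Ok (Suc k) = S (Suc k) \<inter> fk (Suc k) -` {ik (Suc k)}"
          using Ostep[OF step(1)] by auto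
        have "even (ik k + 2)" using step by simp
        moreover have "even (r + 1)" using lr(1) by simp
        ultimately have ev: "even (ik (Suc k))" unfolding e(1) by (rule dvd_mod)
        have "ik (Suc k) \<le> r" unfolding e(1) by (metis Suc_eq_plus1 less_Suc_eq_le mod_less_divisor zero_less_Suc)
        then have "ik (Suc k) < r" using ev lr(1) by (metis le_neq_implies_less)
        then show ?thesis using e ev by auto
      next
        case False
        then have e: "ik (Suc k) = ik k" "Ok (Suc k) = dset \<delta> (Ok k) (\<alpha> k) \<inter> fk (Suc k) -` {ik k}"
          using Ostep[OF step(1)] by auto
        have "dset \<delta> (Ok k) (\<alpha> k) \<subseteq> S (Suc k)" using step closed by (auto simp: dset_def)
        then show ?thesis using e step by auto
      qed
    qed
    define mk where "mk = (\<lambda>k. (S k, Ok k, fk k, ik k))"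
    have mkX: "mk k \<in> X" if "k \<ge> L" for k
    proof -
      have a: "even (ik k)" "ik k < r" using OI[OF that] by auto
      have "ik k \<le> 2 * ?N - 2" using a rle by presburger
      then have "mk k \<in> Q2 F" using OI[OF that] tk[OF that] tkU[OF that] by (simp add: mk_def Q2_def)
      then show ?thesis using hX fsim unfolding mk_def by blast
    qed
    define \<rho>B where "\<rho>B = (\<lambda>k. if k < L then Inl (S k) else Inr (mk k) :: 'q bstate)"
    have run: "is_run (gd \<delta> g X) (Inl I) \<alpha> \<rho>B"
      unfolding is_run_def
    proof (intro conjI allI)
      show "\<rho>B 0 = Inl I" using S0 by (simp add: \<rho>B_def L_def)
      fix k
      show "\<rho>B (Suc k) \<in> gd \<delta> g X (\<rho>B k) (\<alpha> k)"
      proof (cases "Suc k < L")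
        case True then show ?thesis using SS by (simp add: \<rho>B_def gd_def)
      next
        case False
        show ?thesis
        proof (cases "Suc k = L")
          case True
          then have "\<rho>B k = Inl (S k)" "\<rho>B (Suc k) = Inr (S (Suc k), {}, fk (Suc k), 0)"
            using OkL by (auto simp: \<rho>B_def mk_def)
          moreover have "(S (Suc k), {}, fk (Suc k), 0) \<in> X" using mkX[of L] OkL True by (simp add: mk_def)
          ultimately show ?thesis using SS by (auto simp: gd_def)
        next
          case False2: False
          then have kL: "k \<ge> L" using False by simp
          then have rb: "\<rho>B k = Inr (mk k)" "\<rho>B (Suc k) = Inr (mk (Suc k))" by (auto simp: \<rho>B_def)
          have "step3_ok \<delta> (mk k) (\<alpha> k) (mk (Suc k))"
            unfolding mk_def step3_unf
            using Ostep[OF kL] fedge rankk[OF kL] rankk[of "Suc k"] kL by auto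
          then show ?thesis using rb mkX[OF kL] mkX[of "Suc k"] kL SS by (auto simp: gd_def mk_def)
        qed
      qed
    qed
    have resets: "\<exists>k\<ge>N. k \<ge> L \<and> Ok k = {}" for N
    proof (rule ccontr)
      assume "\<not> ?thesis"
      then have ne2: "Ok k \<noteq> {}" if "k \<ge> max N L" for k using that by auto
      define k0 where "k0 = max N L"
      have iconst: "ik k = ik k0" if "k \<ge> k0" for k
        using that
      proof (induction k rule: dec_induct)
        case base then show ?case by simp
      next
        case (step k)
        then have "k \<ge> L" "Ok k \<noteq> {}" using ne2 k0_def by auto
        then show ?case using Ostep[of k] step by auto
      qed
      show False
      proof (rule R.breakpoint[of "ik k0" k0 Ok])
        show "even (ik k0)" using OI[of k0] k0_def by simp
        fix k assume k: "k \<ge> k0"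
        then have kL: "k \<ge> L" by (simp add: k0_def)
        have "\<forall>q\<in>Ok k. R.rnk q k = ik k0"
        proof
          fix q assume q: "q \<in> Ok k"
          then have "q \<in> S k" "fk k q = ik k" using OI[OF kL] by auto
          then show "R.rnk q k = ik k0" using iconst[OF k] by (simp add: fk_def)
        qed
        then show "Ok k \<noteq> {} \<and> Ok k \<subseteq> S k \<and> (\<forall>q\<in>Ok k. R.rnk q k = ik k0)"
          using ne2 k k0_def OI[OF kL] by auto
        fix q' assume "q' \<in> Ok (Suc k)"
        moreover have "Ok (Suc k) = dset \<delta> (Ok k) (\<alpha> k) \<inter> fk (Suc k) -` {ik k}"
          using Ostep[OF kL] ne2 k k0_def by auto
        ultimately show "\<exists>q\<in>Ok k. q' \<in> \<delta> q (\<alpha> k)" by (auto simp: dset_def)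
      qed
    qed
    let ?T = "{k. k \<ge> L \<and> Ok k = {}}"
    have infT: "infinite ?T" using resets by (simp add: infinite_nat_iff_unbounded_le)
    have "\<rho>B ` ?T \<subseteq> Inr ` (UNIV \<times> UNIV \<times> {f. \<forall>q. f q \<le> 2 * ?N} \<times> {..2 * ?N})"
    proof
      fix b assume "b \<in> \<rho>B ` ?T"
      then obtain k where k: "k \<ge> L" "b = Inr (mk k)" by (auto simp: \<rho>B_def)
      have "\<forall>q. fk k q \<le> 2 * ?N" using fk_le[OF k(1)] rle order_trans by blast
      moreover have "ik k \<le> 2 * ?N" using OI[OF k(1)] rle by simp
      ultimately show "b \<in> Inr ` (UNIV \<times> UNIV \<times> {f. \<forall>q. f q \<le> 2 * ?N} \<times> {..2 * ?N})"
        using k by (auto simp: mk_def)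
    qed
    moreover have "finite (Inr ` (UNIV \<times> UNIV \<times> {f. \<forall>q. f q \<le> 2 * ?N} \<times> {..2 * ?N}) :: 'q bstate set)"
    proof -
      have "finite ((UNIV :: 'q set set) \<times> (UNIV :: 'q set set) \<times> {f :: 'q \<Rightarrow> nat. \<forall>q. f q \<le> 2 * ?N} \<times> {..2 * ?N})"
        using finite_bounded_funs by (intro finite_cartesian_product) auto
      then show ?thesis by (rule finite_imageI)
    qed
    ultimately have "finite (\<rho>B ` ?T)" using finite_subset by blast
    then obtain y where y: "y \<in> \<rho>B ` ?T" "infinite (\<rho>B -` {y} \<inter> ?T)" using inf_img_fin_dom' infT by blast
    have yF: "y \<in> sat_final X"
    proof -
      obtain k where k: "k \<ge> L" "Ok k = {}" "y = \<rho>B k" using y(1) by blast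
      then have "y = Inr (S k, {}, fk k, ik k)" by (simp add: \<rho>B_def mk_def)
      moreover have "(S k, {}, fk k, ik k) \<in> X" using mkX[OF k(1)] k(2) by (simp add: mk_def)
      ultimately show ?thesis by (auto simp: sat_final_def)
    qed
    have "\<rho>B -` {y} \<inter> ?T \<subseteq> {k. \<rho>B k = y}" by auto
    then have "infinite {k. \<rho>B k = y}" using y(2) finite_subset by blast
    then have "\<exists>\<^sub>\<infinity>k. \<rho>B k = y" by (simp add: INFM_iff_infinite)
    then have "accepting (sat_final X) \<rho>B" using yF by (auto simp: accepting_def)
    then show ?thesis using run by (auto simp: lang_def)
  qed
qed


lemma lang_eq:
  fixes \<delta> :: "('q::finite, 'a) trans"
  assumes cpl: "complete \<delta>"
    and ext: "\<And>S. S \<subseteq> g S"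
    and gpar: "\<And>S p. p \<in> g S \<Longrightarrow> \<exists>s\<in>S. delayed_sim \<delta> F p s"
    and XQ: "X \<subseteq> Q2 F"
    and hX: "\<And>S Ob f i. (S,Ob,f,i) \<in> Q2 F \<Longrightarrow> (\<forall>p\<in>S. \<forall>q\<in>S. delayed_sim \<delta> F p q \<longrightarrow> f p \<le> f q) \<Longrightarrow> (S,Ob,f,i) \<in> X"
  shows "lang (gd \<delta> g X) {Inl I} (sat_final X) = - lang \<delta> I F"
proof
  show "lang (gd \<delta> g X) {Inl I} (sat_final X) \<subseteq> - lang \<delta> I F"
    using sound[where g=g and X=X and F=F and \<delta>=\<delta> and I=I] ext XQ by blast
  show "- lang \<delta> I F \<subseteq> lang (gd \<delta> g X) {Inl I} (sat_final X)"
    using compl[where g=g and X=X and F=F and \<delta>=\<delta> and I=I] cpl ext gpar hX by blast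
qed

lemma mem_diff4: "(S,Ob,f,i) \<in> A - {(S,Ob,f,i) | S Ob f i. (S,Ob,f,i) \<in> A \<and> P S f} \<longleftrightarrow> (S,Ob,f,i) \<in> A \<and> \<not> P S f"
  by auto

lemma ceil_even_ge: "x \<le> ceil_even x"
  by (simp add: ceil_even_def)

theorem lemma9:
  fixes \<delta> :: "('q::finite, 'a::finite) trans" and I F :: "'q set"
  assumes "complete \<delta>"
  shows "lang (sat_delta \<delta> F (Q2_di \<delta> F)) {Inl I} (sat_final (Q2_di \<delta> F))
           = lang (sat_delta \<delta> F (Q2_de \<delta> F)) {Inl I} (sat_final (Q2_de \<delta> F))
       \<and> lang (sat_delta \<delta> F (Q2_de \<delta> F)) {Inl I} (sat_final (Q2_de \<delta> F))
           = lang (sat_delta \<delta> F (Q2_dide \<delta> F)) {Inl I} (sat_final (Q2_dide \<delta> F))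
       \<and> lang (sat_delta \<delta> F (Q2_dide \<delta> F)) {Inl I} (sat_final (Q2_dide \<delta> F))
           = lang (schewe_delta \<delta> F) {Inl I} (schewe_final F)"
proof -
  have refl: "delayed_sim \<delta> F p p" for p using delayed_refl[OF assms] .
  have sext: "S \<subseteq> str \<delta> F S" for S using refl by (auto simp: str_def)
  have spar: "\<exists>s\<in>S. delayed_sim \<delta> F p s" if "p \<in> str \<delta> F S" for S p using that by (auto simp: str_def)
  have di_sub: "Q2_di \<delta> F \<subseteq> Q2 F" unfolding Q2_di_def by (rule Diff_subset)
  have de_sub: "Q2_de \<delta> F \<subseteq> Q2 F" unfolding Q2_de_def by (rule Diff_subset)
  have dide_sub: "Q2_dide \<delta> F \<subseteq> Q2 F" using di_sub unfolding Q2_dide_def by blast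
  have di_h: "(S,Ob,f,i) \<in> Q2_di \<delta> F"
    if h1: "(S,Ob,f,i) \<in> Q2 F" and h2: "\<forall>p\<in>S. \<forall>q\<in>S. delayed_sim \<delta> F p q \<longrightarrow> f p \<le> f q" for S Ob f i
  proof -
    have "\<not>(\<exists>p\<in>S. \<exists>q\<in>S. direct_sim \<delta> F p q \<and> f p > f q)"
    proof
      assume "\<exists>p\<in>S. \<exists>q\<in>S. direct_sim \<delta> F p q \<and> f p > f q"
      then obtain p q where pq: "p \<in> S" "q \<in> S" "direct_sim \<delta> F p q" "f p > f q" by blast
      have "delayed_sim \<delta> F p q" by (rule direct_delayed[OF pq(3)])
      then have "f p \<le> f q" using h2 pq(1,2) by blast
      then show False using pq(4) by simp
    qed
    then show ?thesis using h1 unfolding Q2_di_def mem_diff4 by (rule conjI[rotated])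
  qed
  have de_h: "(S,Ob,f,i) \<in> Q2_de \<delta> F"
    if h1: "(S,Ob,f,i) \<in> Q2 F" and h2: "\<forall>p\<in>S. \<forall>q\<in>S. delayed_sim \<delta> F p q \<longrightarrow> f p \<le> f q" for S Ob f i
  proof -
    have "\<not>(\<exists>p\<in>S. \<exists>q\<in>S. delayed_sim \<delta> F p q \<and> f p > ceil_even (f q))"
    proof
      assume "\<exists>p\<in>S. \<exists>q\<in>S. delayed_sim \<delta> F p q \<and> f p > ceil_even (f q)"
      then obtain p q where pq: "p \<in> S" "q \<in> S" "delayed_sim \<delta> F p q" "f p > ceil_even (f q)" by blast
      then have "f p \<le> f q" using h2 by blast
      then show False using pq(4) ceil_even_ge[of "f q"] by simp
    qed
    then show ?thesis using h1 unfolding Q2_de_def mem_diff4 by (rule conjI[rotated])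
  qed
  have dide_h: "(S,Ob,f,i) \<in> Q2_dide \<delta> F"
    if "(S,Ob,f,i) \<in> Q2 F" "\<forall>p\<in>S. \<forall>q\<in>S. delayed_sim \<delta> F p q \<longrightarrow> f p \<le> f q" for S Ob f i
    using di_h[OF that] de_h[OF that] by (simp add: Q2_dide_def)
  have e1: "lang (sat_delta \<delta> F (Q2_di \<delta> F)) {Inl I} (sat_final (Q2_di \<delta> F)) = - lang \<delta> I F"
    unfolding sat_gd by (rule lang_eq[OF assms sext spar di_sub di_h])
  have e2: "lang (sat_delta \<delta> F (Q2_de \<delta> F)) {Inl I} (sat_final (Q2_de \<delta> F)) = - lang \<delta> I F"
    unfolding sat_gd by (rule lang_eq[OF assms sext spar de_sub de_h])
  have e3: "lang (sat_delta \<delta> F (Q2_dide \<delta> F)) {Inl I} (sat_final (Q2_dide \<delta> F)) = - lang \<delta> I F"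
    unfolding sat_gd by (rule lang_eq[OF assms sext spar dide_sub dide_h])
  have e4: "lang (schewe_delta \<delta> F) {Inl I} (schewe_final F) = - lang \<delta> I F"
    unfolding schewe_gd schewe_final_eq
    by (rule lang_eq[OF assms]) (use refl in auto)
  show ?thesis using e1 e2 e3 e4 by simp
qed

end
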